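(* Let $\lambda,\mu\in\mathbb{C}$, let $V,W$ be $\mathrm{Vir}$-modules, and let $H,K\in\mathcal{O}_{\mathcal{H}}$ be simple $\mathcal{H}$-modules with nonzero action of $z_3$. (1) Every $\mathcal{L}$-submodule of $V^{\mathcal{L}}\otimes H(\lambda)$ is of the form $(V')^{\mathcal{L}}\otimes H(\lambda)$ for a $\mathrm{Vir}$-submodule $V'$ of $V$. In particular, $V^{\mathcal{L}}\otimes H(\lambda)$ is a simple $\mathcal{L}$-module if and only if $V$ is a simple $\mathrm{Vir}$-module. (2) $V^{\mathcal{L}}\otimes H(\lambda)\cong W^{\mathcal{L}}\otimes K(\mu)$ as $\mathcal L$-modules if and only if $\lambda=\mu$, $V\cong W$ and $H\cong K$.
   Context: $\mathcal{L}$ has basis $\{d_n,I_n,z_1,z_2,z_3\mid n\in\mathbb{Z}\}$ with brackets $[d_n,d_m]=(m-n)d_{m+n}+\delta_{n,-m}\frac{n^3-n}{12}z_1$, $[d_n,I_m]=mI_{m+n}+\delta_{n,-m}(n^2+n)z_2$, $[I_n,I_m]=n\delta_{n,-m}z_3$, $z_i$ central. $\mathrm{Vir}=\mathrm{span}\{d_i,z_1\}$, $\mathcal{H}=\mathrm{span}\{I_i,z_3\}$. $\mathcal{O}_{\mathcal{H}}$: $\mathcal H$-modules in which every vector is killed by $I_i$ for all sufficiently large $i$. For a $\mathrm{Vir}$-module $V$, $V^{\mathcal{L}}$ is the $\mathcal L$-module obtained by letting $\mathbb{C}z_2+\mathcal{H}$ act as $0$. For a simple $H\in\mathcal O_{\mathcal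 H}$ with $z_3$ acting as a nonzero scalar $\dot z_3$ and $\lambda\in\mathbb C$, $H(\lambda)$ is the $\mathcal L$-module on the space $H$ extending the $\mathcal H$-action with $z_1=1-12\lambda^2/\dot z_3$, $z_2=\lambda$, $z_3=\dot z_3$, $d_k=-\frac{1}{2\dot z_3}\sum_{i\in\mathbb Z}:I_{-i}I_{i+k}:+\frac{(k+1)\lambda}{\dot z_3}I_k$, with normal ordering $:I_iI_j:=I_iI_j$ if $i<j$, $=I_jI_i$ otherwise. *)

theory Defs
  imports Complex_Main
begin

text \<open>Basis of the twisted Heisenberg--Virasoro algebra L:
  d n, I n (n in Z), z1, z2, z3.\<close>
datatype Lbasis = Ld int | LI int | Lz1 | Lz2 | Lz3

datatype Virbasis = Vd int | Vz

datatype Hbasis = Hi int | Hz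

definition comm :: "('v \<Rightarrow> 'v::ab_group_add) \<Rightarrow> ('v \<Rightarrow> 'v) \<Rightarrow> 'v \<Rightarrow> 'v" where
  "comm a b = (\<lambda>v. a (b v) - b (a v))"

text \<open>A representation of a Lie algebra with a given basis on a complex vector space
  (scalar multiplication s, carrier = the whole type): linear maps for the basis elements
  whose commutators obey the structure constants.\<close>

definition L_module :: "(complex \<Rightarrow> 'v \<Rightarrow> 'v::ab_group_add) \<Rightarrow> (Lbasis \<Rightarrow> 'v \<Rightarrow> 'v) \<Rightarrow> bool" where
  "L_module s \<rho> \<longleftrightarrow> vector_space s \<and> (\<forall>x. Vector_Spaces.linear s s (\<rho> x)) \<and>
    (\<forall>n m v. comm (\<rho> (Ld n)) (\<rho> (Ld m)) v =
        s (of_int (m - n)) (\<rho> (Ld (m + n)) v)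
        + (if n = - m then s (of_int (n^3 - n) / 12) (\<rho> Lz1 v) else 0)) \<and>
    (\<forall>n m v. comm (\<rho> (Ld n)) (\<rho> (LI m)) v =
        s (of_int m) (\<rho> (LI (m + n)) v)
        + (if n = - m then s (of_int (n^2 + n)) (\<rho> Lz2 v) else 0)) \<and>
    (\<forall>n m v. comm (\<rho> (LI n)) (\<rho> (LI m)) v =
        (if n = - m then s (of_int n) (\<rho> Lz3 v) else 0)) \<and>
    (\<forall>x v. comm (\<rho> Lz1) (\<rho> x) v = 0 \<and> comm (\<rho> Lz2) (\<rho> x) v = 0
           \<and> comm (\<rho> Lz3) (\<rho> x) v = 0)"

definition Vir_module :: "(complex \<Rightarrow> 'v \<Rightarrow> 'v::ab_group_add) \<Rightarrow> (Virbasis \<Rightarrow> 'v \<Rightarrow> 'v) \<Rightarrow> bool" where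
  "Vir_module s \<rho> \<longleftrightarrow> vector_space s \<and> (\<forall>x. Vector_Spaces.linear s s (\<rho> x)) \<and>
    (\<forall>n m v. comm (\<rho> (Vd n)) (\<rho> (Vd m)) v =
        s (of_int (m - n)) (\<rho> (Vd (m + n)) v)
        + (if n = - m then s (of_int (n^3 - n) / 12) (\<rho> Vz v) else 0)) \<and>
    (\<forall>x v. comm (\<rho> Vz) (\<rho> x) v = 0)"

definition H_module :: "(complex \<Rightarrow> 'v \<Rightarrow> 'v::ab_group_add) \<Rightarrow> (Hbasis \<Rightarrow> 'v \<Rightarrow> 'v) \<Rightarrow> bool" where
  "H_module s \<rho> \<longleftrightarrow> vector_space s \<and> (\<forall>x. Vector_Spaces.linear s s (\<rho> x)) \<and>
    (\<forall>n m v. comm (\<rho> (Hi n)) (\<rho> (Hi m)) v =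
        (if n = - m then s (of_int n) (\<rho> Hz v) else 0)) \<and>
    (\<forall>x v. comm (\<rho> Hz) (\<rho> x) v = 0)"

definition in_O_H :: "(Hbasis \<Rightarrow> 'v \<Rightarrow> 'v::zero) \<Rightarrow> bool" where
  "in_O_H \<rho> \<longleftrightarrow> (\<forall>v. \<exists>N. \<forall>i\<ge>N. \<rho> (Hi i) v = 0)"

definition invariant_subspace ::
  "(complex \<Rightarrow> 'v \<Rightarrow> 'v::ab_group_add) \<Rightarrow> ('b \<Rightarrow> 'v \<Rightarrow> 'v) \<Rightarrow> 'v set \<Rightarrow> bool" where
  "invariant_subspace s \<rho> U \<longleftrightarrow> module.subspace s U \<and> (\<forall>x. \<forall>u\<in>U. \<rho> x u \<in> U)"

definition simple_rep ::
  "(complex \<Rightarrow> 'v \<Rightarrow> 'v::ab_group_add) \<Rightarrow> ('b \<Rightarrow> 'v \<Rightarrow> 'v) \<Rightarrow> bool" where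
  "simple_rep s \<rho> \<longleftrightarrow> (\<exists>v::'v. v \<noteq> 0) \<and>
     (\<forall>U. invariant_subspace s \<rho> U \<longrightarrow> U = {0} \<or> U = UNIV)"

definition rep_iso ::
  "(complex \<Rightarrow> 'v \<Rightarrow> 'v::ab_group_add) \<Rightarrow> (complex \<Rightarrow> 'w \<Rightarrow> 'w::ab_group_add)
   \<Rightarrow> ('b \<Rightarrow> 'v \<Rightarrow> 'v) \<Rightarrow> ('b \<Rightarrow> 'w \<Rightarrow> 'w) \<Rightarrow> bool" where
  "rep_iso s1 s2 \<rho>1 \<rho>2 \<longleftrightarrow> (\<exists>f. Vector_Spaces.linear s1 s2 f \<and> bij f \<and>
     (\<forall>x v. f (\<rho>1 x v) = \<rho>2 x (f v)))"

definition VL :: "(Virbasis \<Rightarrow> 'v \<Rightarrow> 'v::zero) \<Rightarrow> Lbasis \<Rightarrow> 'v \<Rightarrow> 'v" where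
  "VL \<rho> x = (case x of Ld n \<Rightarrow> \<rho> (Vd n) | LI n \<Rightarrow> (\<lambda>_. 0) | Lz1 \<Rightarrow> \<rho> Vz
                       | Lz2 \<Rightarrow> (\<lambda>_. 0) | Lz3 \<Rightarrow> (\<lambda>_. 0))"

definition nord :: "(Hbasis \<Rightarrow> 'v \<Rightarrow> 'v) \<Rightarrow> int \<Rightarrow> int \<Rightarrow> 'v \<Rightarrow> 'v" where
  "nord \<rho> a b v = (if a < b then \<rho> (Hi a) (\<rho> (Hi b) v) else \<rho> (Hi b) (\<rho> (Hi a) v))"

text \<open>The (formally infinite) sum over i of :I_{-i} I_{i+k}: applied to v, i.e. the sum of its
  nonzero terms (finitely many on modules in O_H).\<close>
definition sug_sum :: "(Hbasis \<Rightarrow> 'v \<Rightarrow> 'v::comm_monoid_add) \<Rightarrow> int \<Rightarrow> 'v \<Rightarrow> 'v" where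
  "sug_sum \<rho> k v = (\<Sum>i\<in>{i. nord \<rho> (- i) (i + k) v \<noteq> 0}. nord \<rho> (- i) (i + k) v)"

definition Hlam :: "(complex \<Rightarrow> 'v \<Rightarrow> 'v::ab_group_add) \<Rightarrow> (Hbasis \<Rightarrow> 'v \<Rightarrow> 'v)
    \<Rightarrow> complex \<Rightarrow> complex \<Rightarrow> Lbasis \<Rightarrow> 'v \<Rightarrow> 'v" where
  "Hlam s \<rho> c lam x = (case x of
      Ld k \<Rightarrow> (\<lambda>v. s (- 1 / (2 * c)) (sug_sum \<rho> k v)
                    + s ((of_int k + 1) * lam / c) (\<rho> (Hi k) v))
    | LI n \<Rightarrow> \<rho> (Hi n)
    | Lz1 \<Rightarrow> s (1 - 12 * lam^2 / c)
    | Lz2 \<Rightarrow> s lam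
    | Lz3 \<Rightarrow> s c)"

definition is_tensor_product ::
  "(complex \<Rightarrow> 'v \<Rightarrow> 'v::ab_group_add) \<Rightarrow> (complex \<Rightarrow> 'h \<Rightarrow> 'h::ab_group_add)
   \<Rightarrow> (complex \<Rightarrow> 't \<Rightarrow> 't::ab_group_add) \<Rightarrow> ('v \<Rightarrow> 'h \<Rightarrow> 't) \<Rightarrow> bool" where
  "is_tensor_product sV sH sT tp \<longleftrightarrow>
     vector_space sT \<and>
     (\<forall>h. Vector_Spaces.linear sV sT (\<lambda>v. tp v h)) \<and>
     (\<forall>v. Vector_Spaces.linear sH sT (tp v)) \<and>
     module.span sT {tp v h | v h. True} = UNIV \<and>
     (\<forall>\<beta> :: 'v \<Rightarrow> 'h \<Rightarrow> complex.
        (\<forall>h. Vector_Spaces.linear sV (*) (\<lambda>v. \<beta> v h)) \<and>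
        (\<forall>v. Vector_Spaces.linear sH (*) (\<beta> v)) \<longrightarrow>
        (\<exists>\<phi>. Vector_Spaces.linear sT (*) \<phi> \<and> (\<forall>v h. \<phi> (tp v h) = \<beta> v h)))"

definition tensor_action ::
  "(complex \<Rightarrow> 't \<Rightarrow> 't::ab_group_add) \<Rightarrow> ('v \<Rightarrow> 'h \<Rightarrow> 't)
   \<Rightarrow> ('b \<Rightarrow> 'v \<Rightarrow> 'v) \<Rightarrow> ('b \<Rightarrow> 'h \<Rightarrow> 'h) \<Rightarrow> ('b \<Rightarrow> 't \<Rightarrow> 't) \<Rightarrow> bool" where
  "tensor_action sT tp \<rho>1 \<rho>2 \<rho>T \<longleftrightarrow>
     (\<forall>x. Vector_Spaces.linear sT sT (\<rho>T x)) \<and>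
     (\<forall>x v h. \<rho>T x (tp v h) = tp (\<rho>1 x v) h + tp v (\<rho>2 x h))"

end

theory Submission
  imports Defs "HOL-Computational_Algebra.Fundamental_Theorem_Algebra"
    "HOL-Analysis.Continuum_Not_Denumerable"
begin


lemma linD:
  assumes "Vector_Spaces.linear s1 s2 f"
  shows lin_add: "f (x + y) = f x + f y" and lin_scale: "f (s1 c x) = s2 c (f x)"
    and lin_vs1: "vector_space s1" and lin_vs2: "vector_space s2"
    and lin_zero: "f 0 = 0" and lin_neg: "f (- x) = - f x" and lin_diff: "f (x - y) = f x - f y"
    and lin_sum: "f (sum g I) = (\<Sum>i\<in>I. f (g i))"
proof -
  interpret Vector_Spaces.linear s1 s2 f by fact
  show "f (x + y) = f x + f y" "f (s1 c x) = s2 c (f x)" "vector_space s1" "vector_space s2"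
    "f 0 = 0" "f (- x) = - f x" "f (x - y) = f x - f y" "f (sum g I) = (\<Sum>i\<in>I. f (g i))"
    by (auto simp: add scale zero neg diff sum vs1.vector_space_axioms vs2.vector_space_axioms)
qed

lemma vs_mult: "vector_space ((*) :: complex \<Rightarrow> complex \<Rightarrow> complex)"
  by unfold_locales (auto simp: algebra_simps)

lemma functional_dual:
  fixes s :: "complex \<Rightarrow> 'v \<Rightarrow> 'v::ab_group_add"
  assumes vs: "vector_space s" and ind: "\<not> module.dependent s B" and b: "b \<in> B"
  shows "\<exists>\<phi>. Vector_Spaces.linear s (*) \<phi> \<and> \<phi> b = 1 \<and> (\<forall>b'\<in>B. b' \<noteq> b \<longrightarrow> \<phi> b' = 0)"
proof -
  interpret p: vector_space_pair s "(*) :: complex \<Rightarrow> _"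
    using vs vs_mult by (simp add: vector_space_pair_def)
  from p.linear_independent_extend[OF ind, of "\<lambda>x. if x = b then 1 else 0"] show ?thesis
    using b by auto
qed

lemma functional_nonzero:
  fixes s :: "complex \<Rightarrow> 'v \<Rightarrow> 'v::ab_group_add"
  assumes vs: "vector_space s" and x: "x \<noteq> 0"
  shows "\<exists>\<phi>. Vector_Spaces.linear s (*) \<phi> \<and> \<phi> x = 1"
proof -
  interpret vector_space s by fact
  have "independent {x}" using x by simp
  from functional_dual[OF vs this] show ?thesis by auto
qed

lemma functional_sep:
  fixes s :: "complex \<Rightarrow> 'v \<Rightarrow> 'v::ab_group_add"
  assumes vs: "vector_space s" and h: "\<And>\<phi>. Vector_Spaces.linear s (*) \<phi> \<Longrightarrow> \<phi> x = 0"
  shows "x = 0"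
  using functional_nonzero[OF vs, of x] h by force

lemma functional_quot:
  fixes s :: "complex \<Rightarrow> 'v \<Rightarrow> 'v::ab_group_add"
  assumes vs: "vector_space s" and sub: "module.subspace s V" and v: "v \<notin> V"
  shows "\<exists>\<phi>. Vector_Spaces.linear s (*) \<phi> \<and> \<phi> v = 1 \<and> (\<forall>x\<in>V. \<phi> x = 0)"
proof -
  interpret vector_space s by fact
  interpret p: vector_space_pair s "(*) :: complex \<Rightarrow> _"
    using vs vs_mult by (simp add: vector_space_pair_def)
  obtain B where B: "B \<subseteq> V" "independent B" "V \<subseteq> span B"
    using maximal_independent_subset by blast
  have "span B \<subseteq> V" using B sub span_minimal by blast
  hence vB: "v \<notin> span B" using v by blast
  hence ind: "independent (insert v B)" using B by (simp add: independent_insertI)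
  obtain \<phi> where \<phi>: "Vector_Spaces.linear s (*) \<phi>" "\<phi> v = 1" "\<forall>b'\<in>insert v B. b' \<noteq> v \<longrightarrow> \<phi> b' = 0"
    using functional_dual[OF vs ind, of v] by auto
  have "\<forall>x\<in>span B. \<phi> x = 0"
  proof
    fix x assume "x \<in> span B"
    thus "\<phi> x = 0"
      using p.linear_eq_on[OF \<phi>(1) p.linear_zero, of x B] \<phi>(3) vB span_base by force
  qed
  thus ?thesis using \<phi> B by blast
qed

locale tens =
  fixes sV :: "complex \<Rightarrow> 'v \<Rightarrow> 'v::ab_group_add" and sH :: "complex \<Rightarrow> 'h \<Rightarrow> 'h::ab_group_add"
    and sT :: "complex \<Rightarrow> 't \<Rightarrow> 't::ab_group_add" and tp :: "'v \<Rightarrow> 'h \<Rightarrow> 't"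
  assumes TP: "is_tensor_product sV sH sT tp"
begin

lemma lin1: "Vector_Spaces.linear sV sT (\<lambda>v. tp v h)" using TP by (simp add: is_tensor_product_def)
lemma lin2: "Vector_Spaces.linear sH sT (tp v)" using TP by (simp add: is_tensor_product_def)
lemma vsT: "vector_space sT" using TP by (simp add: is_tensor_product_def)
lemma vsV: "vector_space sV" using lin1 by (rule lin_vs1)
lemma vsH: "vector_space sH" using lin2 by (rule lin_vs1)
lemma spanT: "module.span sT {tp v h | v h. True} = UNIV" using TP by (simp add: is_tensor_product_def)

lemma univ:
  assumes "\<And>h. Vector_Spaces.linear sV (*) (\<lambda>v. \<beta> v h)" "\<And>v. Vector_Spaces.linear sH (*) (\<beta> v)"
  shows "\<exists>\<phi>. Vector_Spaces.linear sT (*) \<phi> \<and> (\<forall>v h. \<phi> (tp v h) = \<beta> v h)"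
  using TP assms unfolding is_tensor_product_def by blast

lemma tp_add1: "tp (v + v') h = tp v h + tp v' h" using lin_add[OF lin1] .
lemma tp_add2: "tp v (h + h') = tp v h + tp v h'" using lin_add[OF lin2] .
lemma tp_scale1: "tp (sV a v) h = sT a (tp v h)" using lin_scale[OF lin1] .
lemma tp_scale2: "tp v (sH a h) = sT a (tp v h)" using lin_scale[OF lin2] .
lemma tp_zero1[simp]: "tp 0 h = 0" using lin_zero[OF lin1] .
lemma tp_zero2[simp]: "tp v 0 = 0" using lin_zero[OF lin2] .
lemma tp_neg1: "tp (- v) h = - tp v h"
  by (metis add_eq_0_iff tp_add1 neg_eq_iff_add_eq_0 tp_zero1)
lemma tp_neg2: "tp v (- h) = - tp v h"
  by (metis add_eq_0_iff tp_add2 neg_eq_iff_add_eq_0 tp_zero2)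
lemma tp_diff1: "tp (v - v') h = tp v h - tp v' h"
  by (metis diff_conv_add_uminus tp_add1 tp_neg1)
lemma tp_diff2: "tp v (h - h') = tp v h - tp v h'"
  by (metis diff_conv_add_uminus tp_add2 tp_neg2)
lemma tp_sum1: "tp (\<Sum>i\<in>I. f i) h = (\<Sum>i\<in>I. tp (f i) h)"
  by (induction I rule: infinite_finite_induct) (auto simp: tp_add1)
lemma tp_sum2: "tp v (\<Sum>i\<in>I. f i) = (\<Sum>i\<in>I. tp v (f i))"
  by (induction I rule: infinite_finite_induct) (auto simp: tp_add2)

definition tsum :: "('v \<times> 'h) list \<Rightarrow> 't" where
  "tsum xs = sum_list (map (\<lambda>(v,h). tp v h) xs)"

lemma tsum_simps[simp]: "tsum [] = 0" "tsum ((v,h)#xs) = tp v h + tsum xs"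
  "tsum (xs @ ys) = tsum xs + tsum ys"
  by (auto simp: tsum_def)

lemma all_tsum: "\<exists>xs. t = tsum xs"
proof -
  interpret T: vector_space sT by (rule vsT)
  have "t \<in> T.span {tp v h | v h. True}" using spanT by simp
  thus ?thesis
  proof (induction rule: T.span_induct_alt)
    case base
    then show ?case by (rule exI[of _ "[]"]) simp
  next
    case (step c x y)
    then obtain v h ys where "x = tp v h" "y = tsum ys" by blast
    then show ?case by (intro exI[of _ "(sV c v, h) # ys"]) (simp add: tp_scale1)
  qed
qed

lemma lift:
  fixes sX :: "complex \<Rightarrow> 'x \<Rightarrow> 'x::ab_group_add" and B :: "'v \<Rightarrow> 'h \<Rightarrow> 'x"
  assumes vsX: "vector_space sX"
    and B1: "\<And>h. Vector_Spaces.linear sV sX (\<lambda>v. B v h)"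
    and B2: "\<And>v. Vector_Spaces.linear sH sX (B v)"
  shows "\<exists>F. Vector_Spaces.linear sT sX F \<and> (\<forall>v h. F (tp v h) = B v h)"
proof -
  interpret X: vector_space sX by fact
  interpret T: vector_space sT by (rule vsT)
  define Bs where "Bs xs = sum_list (map (\<lambda>(v,h). B v h) xs)" for xs
  have Bs_simps: "Bs [] = 0" "Bs ((v,h)#xs) = B v h + Bs xs" "Bs (xs @ ys) = Bs xs + Bs ys"
    for v h xs ys by (auto simp: Bs_def)
  have Bneg: "B (- v) h = - B v h" for v h
    using lin_neg[OF B1[of h]] .
  have Bscale: "B (sV a v) h = sX a (B v h)" for a v h
    using lin_scale[OF B1[of h]] .
  have zero: "Bs xs = 0" if "tsum xs = 0" for xs
  proof (rule functional_sep[OF vsX])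
    fix \<chi> assume \<chi>: "Vector_Spaces.linear sX (*) \<chi>"
    have l1: "Vector_Spaces.linear sV (*) (\<lambda>v. \<chi> (B v h))" for h
      using Vector_Spaces.linear_compose[OF B1 \<chi>] by (simp add: o_def)
    have l2: "Vector_Spaces.linear sH (*) (\<lambda>h. \<chi> (B v h))" for v
      using Vector_Spaces.linear_compose[OF B2 \<chi>] by (simp add: o_def)
    obtain \<phi> where \<phi>: "Vector_Spaces.linear sT (*) \<phi>" "\<forall>v h. \<phi> (tp v h) = \<chi> (B v h)"
      using univ[of "\<lambda>v h. \<chi> (B v h)", OF l1 l2] by blast
    have "\<phi> (tsum ys) = \<chi> (Bs ys)" for ys
      by (induction ys) (auto simp: Bs_simps \<phi>(2) lin_add[OF \<phi>(1)] lin_add[OF \<chi>]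
          lin_zero[OF \<phi>(1)] lin_zero[OF \<chi>])
    from this[of xs] that show "\<chi> (Bs xs) = 0"
      using lin_zero[OF \<phi>(1)] by simp
  qed
  define ng where "ng = map (\<lambda>(v::'v,h::'h). (- v, h))"
  have tng: "tsum (ng ys) = - tsum ys" for ys
    by (induction ys) (auto simp: ng_def tp_neg1)
  have bng: "Bs (ng ys) = - Bs ys" for ys
    by (induction ys) (auto simp: ng_def Bneg Bs_simps)
  have wd: "Bs xs = Bs ys" if "tsum xs = tsum ys" for xs ys
    using zero[of "xs @ ng ys"] that by (simp add: tng bng Bs_simps)
  define F where "F t = Bs (SOME xs. t = tsum xs)" for t
  have F: "F (tsum xs) = Bs xs" for xs
    unfolding F_def by (rule wd) (metis (mono_tags) someI_ex all_tsum)
  define sc where "sc a = map (\<lambda>(v::'v,h::'h). (sV a v, h))" for a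
  have tsc: "tsum (sc a ys) = sT a (tsum ys)" for a ys
    by (induction ys) (auto simp: sc_def tp_scale1 T.scale_right_distrib)
  have bsc: "Bs (sc a ys) = sX a (Bs ys)" for a ys
    by (induction ys) (auto simp: sc_def Bscale Bs_simps X.scale_right_distrib)
  have "Vector_Spaces.linear sT sX F"
    unfolding Vector_Spaces.linear_iff
  proof (intro conjI allI)
    show "vector_space sT" by (rule vsT)
    show "vector_space sX" by fact
    fix x y
    obtain xs ys where "x = tsum xs" "y = tsum ys" using all_tsum by blast
    thus "F (x + y) = F x + F y" using F[of "xs @ ys"] by (simp add: F Bs_simps)
  next
    fix c x
    obtain xs where "x = tsum xs" using all_tsum by blast
    thus "F (sT c x) = sX c (F x)" using F[of "sc c xs"] by (simp add: F tsc bsc)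
  qed
  moreover have "F (tp v h) = B v h" for v h
    using F[of "[(v,h)]"] by (simp add: Bs_simps)
  ultimately show ?thesis by blast
qed


lemma indep_rep: "\<exists>B g. finite B \<and> module.independent sV B \<and> t = (\<Sum>b\<in>B. tp b (g b))"
proof -
  interpret V: vector_space sV by (rule vsV)
  interpret H: vector_space sH by (rule vsH)
  obtain xs where t: "t = tsum xs" using all_tsum by blast
  have "\<exists>B g. finite B \<and> V.independent B \<and> tsum xs = (\<Sum>b\<in>B. tp b (g b))"
  proof (induction xs)
    case Nil
    then show ?case by (intro exI[of _ "{}"]) (simp add: V.independent_empty)
  next
    case (Cons p xs)
    obtain v h where p: "p = (v,h)" by fastforce
    from Cons obtain B g where B: "finite B" "V.independent B" "tsum xs = (\<Sum>b\<in>B. tp b (g b))"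
      by blast
    show ?case
    proof (cases "v \<in> V.span B")
      case True
      have "v \<in> range (\<lambda>u. \<Sum>b\<in>B. sV (u b) b)" using True V.span_finite[OF B(1)] by blast
      then obtain u where u: "v = (\<Sum>b\<in>B. sV (u b) b)" by blast
      have "tp v h = (\<Sum>b\<in>B. tp b (sH (u b) h))"
        unfolding u tp_sum1 by (simp add: tp_scale1 tp_scale2)
      hence "tsum (p # xs) = (\<Sum>b\<in>B. tp b (g b + sH (u b) h))"
        using B(3) by (simp add: p tp_add2 sum.distrib add.commute)
      thus ?thesis using B(1,2) by (intro exI[of _ B] exI[of _ "\<lambda>b. g b + sH (u b) h"]) simp
    next
      case False
      hence vB: "v \<notin> B" using V.span_base by blast
      have ind: "V.independent (insert v B)" using False B(2) V.independent_insertI by blast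
      have "tsum (p # xs) = (\<Sum>b\<in>insert v B. tp b ((g(v:=h)) b))"
        using B(3) vB B(1) by (simp add: p sum.insert) (intro sum.cong, auto)
      thus ?thesis using ind B(1) by (intro exI[of _ "insert v B"] exI[of _ "g(v:=h)"]) simp
    qed
  qed
  thus ?thesis using t by simp
qed

lemma indep_zero:
  assumes B: "finite B" "module.independent sV B" and z: "(\<Sum>b\<in>B. tp b (g b)) = 0" and b: "b \<in> B"
  shows "g b = 0"
proof -
  interpret V: vector_space sV by (rule vsV)
  interpret H: vector_space sH by (rule vsH)
  obtain \<phi> where \<phi>: "Vector_Spaces.linear sV (*) \<phi>" "\<phi> b = 1" "\<forall>b'\<in>B. b' \<noteq> b \<longrightarrow> \<phi> b' = 0"
    using functional_dual[OF vsV B(2) b] by blast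
  have l1: "Vector_Spaces.linear sV sH (\<lambda>v. sH (\<phi> v) h)" for h
    unfolding Vector_Spaces.linear_iff
    by (simp add: vsV vsH lin_add[OF \<phi>(1)] lin_scale[OF \<phi>(1)] H.scale_left_distrib)
  have l2: "Vector_Spaces.linear sH sH (\<lambda>h. sH (\<phi> v) h)" for v
    unfolding Vector_Spaces.linear_iff
    by (simp add: vsH H.scale_right_distrib H.scale_left_commute)
  obtain F where F: "Vector_Spaces.linear sT sH F" "\<forall>v h. F (tp v h) = sH (\<phi> v) h"
    using lift[OF vsH l1 l2] by blast
  have "F (\<Sum>b\<in>B. tp b (g b)) = (\<Sum>b'\<in>B. sH (\<phi> b') (g b'))"
    by (simp add: lin_sum[OF F(1)] F(2))
  also have "\<dots> = sH (\<phi> b) (g b)"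
    using B(1) b \<phi>(3) by (subst sum.remove[of B b]) (auto intro!: sum.neutral)
  finally show ?thesis using z lin_zero[OF F(1)] \<phi>(2) by simp
qed

lemma tp_eq0: "tp v h = 0 \<Longrightarrow> v = 0 \<or> h = 0"
proof -
  interpret V: vector_space sV by (rule vsV)
  assume "tp v h = 0"
  moreover have "v \<noteq> 0 \<Longrightarrow> V.independent {v}" by simp
  ultimately show ?thesis using indep_zero[of "{v}" "\<lambda>_. h" v] by auto
qed

lemma tp_inj1: "tp v h = tp v' h \<Longrightarrow> h \<noteq> 0 \<Longrightarrow> v = v'"
  using tp_eq0[of "v - v'" h] by (simp add: tp_diff1)

lemma swap: "tens sH sV sT (\<lambda>h v. tp v h)"
proof -
  have "{tp v h | h v. True} = {tp v h | v h. True}" by blast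
  moreover have "\<exists>\<phi>. Vector_Spaces.linear sT (*) \<phi> \<and> (\<forall>h v. \<phi> (tp v h) = \<beta> h v)"
    if "\<forall>v. Vector_Spaces.linear sH (*) (\<lambda>h. \<beta> h v)" "\<forall>h. Vector_Spaces.linear sV (*) (\<beta> h)" for \<beta>
    using univ[of "\<lambda>v h. \<beta> h v"] that by auto
  ultimately show ?thesis
    unfolding tens_def is_tensor_product_def using vsT lin1 lin2 spanT by auto
qed

end



locale opl =
  fixes s :: "complex \<Rightarrow> 'h \<Rightarrow> 'h::ab_group_add" and f :: "'h \<Rightarrow> 'h"
  assumes lf: "Vector_Spaces.linear s s f"
begin

lemma vs: "vector_space s" using lf by (rule lin_vs1)

sublocale V: vector_space s by (rule vs)

lemma fpow_lin: "Vector_Spaces.linear s s (f ^^ i)"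
proof (induction i)
  case 0
  then show ?case using V.linear_id by (simp add: id_def)
next
  case (Suc i)
  show ?case unfolding funpow.simps(2) by (rule Vector_Spaces.linear_compose[OF Suc lf])
qed

definition opoly :: "complex poly \<Rightarrow> 'h \<Rightarrow> 'h" where
  "opoly p v = (\<Sum>i\<le>degree p. s (coeff p i) ((f ^^ i) v))"

lemma opoly_bound: "degree p \<le> n \<Longrightarrow> opoly p v = (\<Sum>i\<le>n. s (coeff p i) ((f ^^ i) v))"
  unfolding opoly_def
  by (rule sum.mono_neutral_left) (auto simp: coeff_eq_0 V.scale_zero_left)

lemma opoly_add: "opoly (p + q) v = opoly p v + opoly q v"
proof -
  define n where "n = max (degree p) (degree q)"
  have "degree (p + q) \<le> n" unfolding n_def by (rule degree_add_le) auto
  thus ?thesis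
    by (simp add: opoly_bound[of _ n] n_def V.scale_left_distrib sum.distrib)
qed

lemma opoly_smult: "opoly (smult c p) v = s c (opoly p v)"
  unfolding opoly_def
  by (simp add: V.scale_sum_right V.scale_scale)

lemma opoly_0[simp]: "opoly 0 v = 0"
  unfolding opoly_def by (simp add: V.scale_zero_left)

lemma opoly_const: "opoly [:a:] v = s a v"
  unfolding opoly_def by simp

lemma opoly_sum: "opoly (\<Sum>a\<in>J. q a) v = (\<Sum>a\<in>J. opoly (q a) v)"
  by (induction J rule: infinite_finite_induct) (auto simp: opoly_add)

lemma opoly_lin: "Vector_Spaces.linear s s (opoly p)"
proof -
  have "Vector_Spaces.linear s s (\<lambda>v. s (coeff p i) ((f ^^ i) v))" for i
    using Vector_Spaces.linear_compose[OF fpow_lin V.linear_scale_self]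
    by (simp add: o_def)
  thus ?thesis unfolding opoly_def[abs_def]
    using vector_space_pair.linear_compose_sum[of s s "{..degree p}"] vs
    by (simp add: vector_space_pair_def)
qed

lemma opoly_pCons0: "opoly (pCons 0 q) v = f (opoly q v)"
proof -
  have "opoly (pCons 0 q) v = (\<Sum>i\<le>Suc (degree q). s (coeff (pCons 0 q) i) ((f ^^ i) v))"
    by (rule opoly_bound) (simp add: degree_pCons_le)
  also have "\<dots> = (\<Sum>i\<le>degree q. s (coeff q i) ((f ^^ Suc i) v))"
    by (subst sum.atMost_Suc_shift) (simp add: V.scale_zero_left)
  also have "\<dots> = f (opoly q v)"
    unfolding opoly_def by (simp add: lin_sum[OF lf] lin_scale[OF lf])
  finally show ?thesis .
qed

lemma opoly_lin_factor: "opoly ([:-b, 1:] * q) v = f (opoly q v) - s b (opoly q v)"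
proof -
  have "[:-b, 1:] * q = pCons 0 q - smult b q"
    by (simp add: mult_pCons_left)
  hence "opoly ([:-b, 1:] * q) v = opoly (pCons 0 q) v - opoly (smult b q) v"
    using opoly_add[of "pCons 0 q - smult b q" "smult b q" v] by simp
  thus ?thesis by (simp add: opoly_pCons0 opoly_smult)
qed

lemma fpow_commute: "(f ^^ i) (f v) = f ((f ^^ i) v)"
  by (metis comp_apply funpow_Suc_right funpow_swap1)

lemma opoly_commute: "opoly q (f v - s b v) = f (opoly q v) - s b (opoly q v)"
  unfolding opoly_def
  by (simp add: lin_diff[OF fpow_lin] lin_scale[OF fpow_lin] fpow_commute lin_sum[OF lf]
      lin_scale[OF lf] V.scale_right_diff_distrib sum_subtractf
      V.scale_left_commute V.scale_sum_right V.scale_scale mult.commute)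

lemma opoly_nonzero:
  assumes inj: "\<And>b v. f v - s b v = 0 \<Longrightarrow> v = 0" and v: "v \<noteq> 0" and p: "p \<noteq> 0"
  shows "opoly p v \<noteq> 0"
  using p
proof (induction "degree p" arbitrary: p rule: less_induct)
  case less
  show ?case
  proof (cases "degree p = 0")
    case True
    then obtain a where "p = [:a:]" by (metis degree_eq_zeroE)
    with less.prems have "a \<noteq> 0" "p = [:a:]" by auto
    thus ?thesis using v by (simp add: opoly_const V.scale_eq_0_iff)
  next
    case False
    hence "\<not> constant (poly p)" by (simp add: constant_degree)
    then obtain z where "poly p z = 0" using fundamental_theorem_of_algebra by blast
    then obtain q where q: "p = [:-z, 1:] * q" by (auto simp: poly_eq_0_iff_dvd elim: dvdE)
    with less.prems have q0: "q \<noteq> 0" by auto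
    have "degree p = 1 + degree q" using q q0 by (simp add: degree_mult_eq del: mult_pCons_left)
    hence "opoly q v \<noteq> 0" using less.hyps q0 by simp
    moreover have "opoly p v = f (opoly q v) - s z (opoly q v)"
      unfolding q by (rule opoly_lin_factor)
    ultimately show ?thesis using inj by metis
  qed
qed

end



locale repr =
  fixes s :: "complex \<Rightarrow> 'h \<Rightarrow> 'h::ab_group_add" and \<rho> :: "'b \<Rightarrow> 'h \<Rightarrow> 'h"
  assumes vs: "vector_space s" and lin: "\<And>x. Vector_Spaces.linear s s (\<rho> x)"
begin

sublocale V: vector_space s by (rule vs)

inductive_set ops :: "('h \<Rightarrow> 'h) set" where
  oid: "(\<lambda>h. h) \<in> ops"
| ocomp: "X \<in> ops \<Longrightarrow> (\<lambda>h. \<rho> x (X h)) \<in> ops"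
| oadd: "X \<in> ops \<Longrightarrow> Y \<in> ops \<Longrightarrow> (\<lambda>h. X h + Y h) \<in> ops"
| oscale: "X \<in> ops \<Longrightarrow> (\<lambda>h. s a (X h)) \<in> ops"

lemma ops_lin: "X \<in> ops \<Longrightarrow> Vector_Spaces.linear s s X"
proof (induction rule: ops.induct)
  case oid
  then show ?case using V.linear_id by (simp add: id_def)
next
  case (ocomp X x)
  then show ?case using Vector_Spaces.linear_compose[OF ocomp.IH lin[of x]] by (simp add: o_def)
next
  case (oadd X Y)
  then show ?case unfolding Vector_Spaces.linear_iff
    by (simp add: vs lin_add[OF oadd.IH(1)] lin_add[OF oadd.IH(2)] lin_scale[OF oadd.IH(1)]
        lin_scale[OF oadd.IH(2)] V.scale_right_distrib)
next
  case (oscale X a)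
  then show ?case unfolding Vector_Spaces.linear_iff
    by (simp add: vs lin_add[OF oscale.IH] lin_scale[OF oscale.IH] V.scale_right_distrib
        V.scale_left_commute)
qed

lemma ops_zero: "(\<lambda>h. 0) \<in> ops"
  using oscale[OF oid, of 0] by simp

lemma ops_diff: "X \<in> ops \<Longrightarrow> Y \<in> ops \<Longrightarrow> (\<lambda>h. X h - Y h) \<in> ops"
  using oadd[OF _ oscale[of Y "-1"], of X] by (simp add: V.scale_minus_left)

lemma ops_sum: "finite I \<Longrightarrow> (\<And>i. i \<in> I \<Longrightarrow> X i \<in> ops) \<Longrightarrow> (\<lambda>h. \<Sum>i\<in>I. X i h) \<in> ops"
  by (induction I rule: finite_induct) (auto simp: ops_zero intro: oadd)

lemma ops_comp: "X \<in> ops \<Longrightarrow> Y \<in> ops \<Longrightarrow> (\<lambda>h. X (Y h)) \<in> ops"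
  by (induction rule: ops.induct) (auto intro: ops.intros)

lemma ops_commute:
  assumes f: "Vector_Spaces.linear s s f" and c: "\<And>x v. f (\<rho> x v) = \<rho> x (f v)"
  shows "X \<in> ops \<Longrightarrow> f (X v) = X (f v)"
  by (induction arbitrary: v rule: ops.induct) (auto simp: c lin_add[OF f] lin_scale[OF f])

lemma orbit:
  assumes simp: "simple_rep s \<rho>" and h: "h \<noteq> 0"
  shows "\<exists>X\<in>ops. X h = k"
proof -
  let ?U = "{X h | X. X \<in> ops}"
  have "invariant_subspace s \<rho> ?U"
    unfolding invariant_subspace_def V.subspace_def
  proof (intro conjI allI ballI)
    show "0 \<in> ?U" using ops_zero by force
    show "x + y \<in> ?U" if a: "x \<in> ?U" "y \<in> ?U" for x y
    proof -
      obtain X Y where "X \<in> ops" "Y \<in> ops" "x = X h" "y = Y h" using a by blast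
      thus ?thesis using oadd[of X Y] by force
    qed
    show "s c x \<in> ?U" if a: "x \<in> ?U" for c x
    proof -
      obtain X where "X \<in> ops" "x = X h" using a by blast
      thus ?thesis using oscale[of X c] by force
    qed
    show "\<rho> x u \<in> ?U" if a: "u \<in> ?U" for x u
    proof -
      obtain X where "X \<in> ops" "u = X h" using a by blast
      thus ?thesis using ocomp[of X x] by force
    qed
  qed
  moreover have "h \<in> ?U" using oid by force
  ultimately have "?U = UNIV" using simp h unfolding simple_rep_def by blast
  hence "k \<in> ?U" by simp
  thus ?thesis by blast
qed

lemma inv_ker:
  assumes g: "Vector_Spaces.linear s s g" and c: "\<And>x v. g (\<rho> x v) = \<rho> x (g v)"
  shows "invariant_subspace s \<rho> {v. g v = 0}"
  unfolding invariant_subspace_def V.subspace_def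
  using lin_add[OF g] lin_scale[OF g] lin_zero[OF g] c lin_zero[OF lin] by simp

lemma inv_range:
  assumes g: "Vector_Spaces.linear s s g" and c: "\<And>x v. g (\<rho> x v) = \<rho> x (g v)"
  shows "invariant_subspace s \<rho> (range g)"
  unfolding invariant_subspace_def V.subspace_def
proof (intro conjI allI ballI)
  have "g 0 = 0" by (rule lin_zero[OF g])
  thus "0 \<in> range g" by (metis rangeI)
  show "x + y \<in> range g" if xy: "x \<in> range g" "y \<in> range g" for x y
  proof -
    obtain a b where "x = g a" "y = g b" using xy by blast
    hence "x + y = g (a + b)" by (simp add: lin_add[OF g])
    thus ?thesis by blast
  qed
  show "s c x \<in> range g" if xr: "x \<in> range g" for c x
  proof -
    obtain a where "x = g a" using xr by blast
    hence "s c x = g (s c a)" by (simp add: lin_scale[OF g])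
    thus ?thesis by blast
  qed
  show "\<rho> x u \<in> range g" if ur: "u \<in> range g" for x u
  proof -
    obtain a where "u = g a" using ur by blast
    hence "\<rho> x u = g (\<rho> x a)" by (simp add: c)
    thus ?thesis by blast
  qed
qed


lemma schur:
  assumes simp: "simple_rep s \<rho>" and cnt: "countable (UNIV :: 'b set)"
    and f: "Vector_Spaces.linear s s f" and c: "\<And>x v. f (\<rho> x v) = \<rho> x (f v)"
  shows "\<exists>a. \<forall>v. f v = s a v"
proof (rule ccontr)
  assume na: "\<not> ?thesis"
  interpret O: opl s f by (simp add: opl_def f)
  obtain h0 :: 'h where h0: "h0 \<noteq> 0" using simp unfolding simple_rep_def by blast
  define g where "g a v = f v - s a v" for a v
  have glin: "Vector_Spaces.linear s s (g a)" for a
    unfolding Vector_Spaces.linear_iff g_def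
    by (simp add: vs lin_add[OF f] lin_scale[OF f] V.scale_right_distrib V.scale_right_diff_distrib
        V.scale_left_commute)
  have gc: "g a (\<rho> x v) = \<rho> x (g a v)" for a x v
    by (simp add: g_def c lin_diff[OF lin] lin_scale[OF lin])
  have ginj: "v = 0" if "g a v = 0" for a v
  proof -
    have "{v. g a v = 0} = {0} \<or> {v. g a v = 0} = UNIV"
      using simp inv_ker[OF glin gc] unfolding simple_rep_def by blast
    moreover have "{v. g a v = 0} \<noteq> UNIV"
    proof
      assume "{v. g a v = 0} = UNIV"
      hence "\<forall>v. f v = s a v" by (auto simp: g_def)
      thus False using na by blast
    qed
    ultimately show ?thesis using that by blast
  qed
  have gsurj: "\<exists>v. g a v = y" for a y
  proof -
    have "range (g a) = {0} \<or> range (g a) = UNIV"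
      using simp inv_range[OF glin gc] unfolding simple_rep_def by blast
    moreover have "g a h0 \<noteq> 0" using ginj h0 by blast
    ultimately have "range (g a) = UNIV" by (metis rangeI singletonD)
    thus ?thesis by (metis UNIV_I image_iff)
  qed
  define e where "e a = (SOME v. g a v = h0)" for a
  have ge: "g a (e a) = h0" for a unfolding e_def by (rule someI_ex) (rule gsurj)
  define P where "P K = (\<Prod>b\<in>K. [:-b, 1:])" for K :: "complex set"
  have PK: "O.opoly (P K) (e a) = O.opoly (P (K - {a})) h0" if "a \<in> K" "finite K" for K a
  proof -
    have "P K = [:-a, 1:] * P (K - {a})" unfolding P_def using that by (simp add: prod.remove)
    hence "O.opoly (P K) (e a) = f (O.opoly (P (K - {a})) (e a)) - s a (O.opoly (P (K - {a})) (e a))"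
      by (simp only: O.opoly_lin_factor)
    also have "\<dots> = O.opoly (P (K - {a})) (f (e a) - s a (e a))"
      by (rule O.opoly_commute[symmetric])
    also have "\<dots> = O.opoly (P (K - {a})) h0" using ge[of a] by (simp add: g_def)
    finally show ?thesis .
  qed
  have indep: "c a0 = 0" if J: "finite J" "(\<Sum>a\<in>J. s (c a) (e a)) = 0" "a0 \<in> J" for J c a0
  proof -
    define Q where "Q = (\<Sum>a\<in>J. smult (c a) (P (J - {a})))"
    have "0 = O.opoly (P J) (\<Sum>a\<in>J. s (c a) (e a))"
      using J(2) lin_zero[OF O.opoly_lin] by simp
    also have "\<dots> = (\<Sum>a\<in>J. s (c a) (O.opoly (P J) (e a)))"
      by (simp add: lin_sum[OF O.opoly_lin] lin_scale[OF O.opoly_lin])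
    also have "\<dots> = (\<Sum>a\<in>J. O.opoly (smult (c a) (P (J - {a}))) h0)"
      by (intro sum.cong refl) (simp add: PK J(1) O.opoly_smult)
    also have "\<dots> = O.opoly Q h0" unfolding Q_def by (simp add: O.opoly_sum)
    finally have "O.opoly Q h0 = 0" by simp
    hence Q0: "Q = 0" using O.opoly_nonzero[of h0 Q] h0 ginj unfolding g_def by blast
    have pP: "poly (P K) x = (\<Prod>b\<in>K. x - b)" for K x
      unfolding P_def by (simp add: poly_prod)
    have "poly Q a0 = (\<Sum>a\<in>J. c a * (\<Prod>b\<in>J - {a}. a0 - b))"
      unfolding Q_def by (simp add: poly_sum pP)
    also have "\<dots> = c a0 * (\<Prod>b\<in>J - {a0}. a0 - b)"
    proof (subst sum.remove[OF J(1) J(3)], subst sum.neutral)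
      show "\<forall>a\<in>J - {a0}. c a * (\<Prod>b\<in>J - {a}. a0 - b) = 0"
        using J(1,3) by (auto simp: prod_zero_iff)
    qed simp
    finally have "c a0 * (\<Prod>b\<in>J - {a0}. a0 - b) = 0" using Q0 by simp
    moreover have "(\<Prod>b\<in>J - {a0}. a0 - b) \<noteq> 0" using J(1) by (simp add: prod_zero_iff)
    ultimately show ?thesis by simp
  qed
  have einj: "inj e"
  proof (rule injI, rule ccontr)
    fix a b assume eq: "e a = e b" and ab: "a \<noteq> b"
    have "(\<Sum>x\<in>{a,b}. s (if x = a then 1 else -1) (e x)) = 0"
      using ab eq by simp
    from indep[OF _ this, of a] show False by simp
  qed
  let ?E = "range e"
  have indE: "V.independent ?E"
    unfolding V.dependent_explicit
  proof (intro notI, elim exE conjE bexE)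
    fix t u v assume t: "finite t" "t \<subseteq> ?E" "(\<Sum>v\<in>t. s (u v) v) = 0" "v \<in> t" "u v \<noteq> 0"
    define J where "J = e -` t"
    have tJ: "t = e ` J" using t(2) unfolding J_def by blast
    have fJ: "finite J" unfolding J_def using t(1) einj by (simp add: finite_vimageI)
    have s0: "(\<Sum>a\<in>J. s (u (e a)) (e a)) = 0"
      using t(3) unfolding tJ by (subst (asm) sum.reindex) (auto intro: inj_on_subset[OF einj])
    obtain a where a: "a \<in> J" "v = e a" using t(4) tJ by blast
    have "u (e a) = 0" by (rule indep[OF fJ s0 a(1)])
    thus False using t(5) a(2) by simp
  qed
  define C where "C = range (\<lambda>w. foldr \<rho> w h0)"
  have cC: "countable C" unfolding C_def
    using countable_lists[OF cnt] by simp
  have "V.span C = UNIV"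
  proof -
    have inv: "\<rho> x y \<in> V.span C" if "y \<in> V.span C" for x y
      using that
    proof (induction rule: V.span_induct_alt)
      case base
      then show ?case by (simp add: lin_zero[OF lin] V.span_zero)
    next
      case (step c a y)
      from step(1) obtain w where "a = foldr \<rho> w h0" unfolding C_def by blast
      hence "\<rho> x a = foldr \<rho> (x # w) h0" by simp
      hence "\<rho> x a \<in> C" unfolding C_def by blast
      then show ?case using step(2)
        by (simp add: lin_add[OF lin] lin_scale[OF lin] V.span_add V.span_scale V.span_base)
    qed
    have "invariant_subspace s \<rho> (V.span C)"
      unfolding invariant_subspace_def using inv by simp
    moreover have "h0 \<in> V.span C" unfolding C_def by (rule V.span_base) (metis foldr_Nil id_apply rangeI)
    ultimately show ?thesis using simp h0 unfolding simple_rep_def by blast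
  qed
  hence fin: "\<exists>t. finite t \<and> t \<subseteq> C \<and> v \<in> V.span t" for v
  proof -
    assume "V.span C = UNIV"
    hence "v \<in> V.span C" by simp
    then obtain t r where "finite t" "t \<subseteq> C" "v = (\<Sum>a\<in>t. s (r a) a)"
      unfolding V.span_explicit by blast
    moreover have "(\<Sum>a\<in>t. s (r a) a) \<in> V.span t"
      by (intro V.span_sum V.span_scale V.span_base)
    ultimately show ?thesis by blast
  qed
  define T where "T v = (SOME t. finite t \<and> t \<subseteq> C \<and> v \<in> V.span t)" for v
  have T: "finite (T v) \<and> T v \<subseteq> C \<and> v \<in> V.span (T v)" for v
    unfolding T_def by (rule someI_ex) (rule fin)
  define F where "F = {t. finite t \<and> t \<subseteq> C}"
  have cF: "countable F" unfolding F_def by (rule countable_Collect_finite_subset[OF cC])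
  show False
  proof (cases "\<forall>t\<in>F. finite {v\<in>?E. T v = t}")
    case True
    have "?E \<subseteq> (\<Union>t\<in>F. {v\<in>?E. T v = t})" using T unfolding F_def by blast
    moreover have "countable (\<Union>t\<in>F. {v\<in>?E. T v = t})"
      using cF True by (intro countable_UN) (auto intro: countable_finite)
    ultimately have "countable ?E" by (rule countable_subset)
    hence "countable (UNIV :: complex set)"
      using countable_image_inj_on einj by blast
    thus False using uncountable_UNIV_complex by blast
  next
    case False
    then obtain t where t: "t \<in> F" "infinite {v\<in>?E. T v = t}" by blast
    obtain D where D: "finite D" "card D = Suc (card t)" "D \<subseteq> {v\<in>?E. T v = t}"
      using infinite_arbitrarily_large[OF t(2)] by blast
    have "D \<subseteq> V.span t" using D(3) T by blast
    moreover have "V.independent D" using V.independent_mono[OF indE] D(3) by blast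
    moreover have "finite t" using t(1) unfolding F_def by simp
    ultimately have "card D \<le> card t" using V.independent_span_bound by blast
    thus False using D(2) by simp
  qed
qed


lemma dens_from_sep:
  assumes simp: "simple_rep s \<rho>"
    and sep: "\<exists>X\<in>ops. X h \<noteq> 0 \<and> (\<forall>h'\<in>S - {h}. X h' = 0)"
  shows "\<exists>X\<in>ops. X h = k \<and> (\<forall>h'\<in>S - {h}. X h' = 0)"
proof -
  obtain X where X: "X \<in> ops" "X h \<noteq> 0" "\<forall>h'\<in>S - {h}. X h' = 0" using sep by blast
  obtain Z where Z: "Z \<in> ops" "Z (X h) = k" using orbit[OF simp X(2)] by blast
  show ?thesis
    using ops_comp[OF Z(1) X(1)] Z(2) X(3) lin_zero[OF ops_lin[OF Z(1)]] by (intro bexI[of _ "\<lambda>v. Z (X v)"]) auto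
qed

lemma sep:
  assumes simp: "simple_rep s \<rho>" and cnt: "countable (UNIV :: 'b set)"
  shows "finite S \<Longrightarrow> V.independent S \<Longrightarrow> h \<in> S \<Longrightarrow> \<exists>X\<in>ops. X h \<noteq> 0 \<and> (\<forall>h'\<in>S - {h}. X h' = 0)"
proof (induction "card S" arbitrary: S h rule: less_induct)
  case less
  define S' where "S' = S - {h}"
  have fS': "finite S'" using less.prems(1) S'_def by simp
  have iS': "V.independent S'" using V.independent_mono[OF less.prems(2)] S'_def by blast
  have cS': "card S' < card S" using less.prems S'_def by (metis card_Diff1_less)
  have dens: "\<exists>X\<in>ops. X i = k \<and> (\<forall>j\<in>S' - {i}. X j = 0)" if "i \<in> S'" for i k
    using dens_from_sep[OF simp less.hyps[OF cS' fS' iS' that]] by blast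
  show ?case
  proof (rule ccontr)
    assume "\<not> ?case"
    hence kill: "X h = 0" if "X \<in> ops" "\<forall>j\<in>S'. X j = 0" for X
      using that unfolding S'_def by blast
    have wd: "X h = Y h" if "X \<in> ops" "Y \<in> ops" "\<forall>j\<in>S'. X j = Y j" for X Y
      using kill[OF ops_diff[OF that(1,2)]] that(3) by simp
    define spec where "spec i k X \<longleftrightarrow> X \<in> ops \<and> X i = k \<and> (\<forall>j\<in>S' - {i}. X j = 0)" for i k X
    define \<phi> where "\<phi> i k = (SOME X. spec i k X) h" for i k
    have sp: "spec i k (SOME X. spec i k X)" if "i \<in> S'" for i k
    proof -
      have "\<exists>X. spec i k X" using dens[OF that] unfolding spec_def by blast
      thus ?thesis by (rule someI_ex)
    qed
    have phi_eq: "\<phi> i k = X h" if "i \<in> S'" "spec i k X" for i k X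
    proof -
      define Z where "Z = (SOME X. spec i k X)"
      have Z: "spec i k Z" unfolding Z_def by (rule sp[OF that(1)])
      have "\<forall>j\<in>S'. Z j = X j"
      proof
        fix j assume "j \<in> S'"
        thus "Z j = X j" using Z that(2) unfolding spec_def by (cases "j = i") auto
      qed
      thus ?thesis unfolding \<phi>_def Z_def[symmetric] using Z that(2) unfolding spec_def
        by (intro wd) auto
    qed
    have phi_scal: "\<exists>a. \<forall>k. \<phi> i k = s a k" if i: "i \<in> S'" for i
    proof (rule schur[OF simp cnt])
      show "Vector_Spaces.linear s s (\<phi> i)"
        unfolding Vector_Spaces.linear_iff
      proof (intro conjI allI)
        show "vector_space s" by (rule vs)
        show "vector_space s" by (rule vs)
        fix x y
        obtain X Y where "spec i x X" "spec i y Y" using sp[OF i] by blast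
        hence "spec i (x + y) (\<lambda>v. X v + Y v)" unfolding spec_def by (auto intro: oadd)
        thus "\<phi> i (x + y) = \<phi> i x + \<phi> i y"
          using phi_eq[OF i] \<open>spec i x X\<close> \<open>spec i y Y\<close> by metis
      next
        fix c x
        obtain X where "spec i x X" using sp[OF i] by blast
        hence "spec i (s c x) (\<lambda>v. s c (X v))" unfolding spec_def by (auto intro: oscale)
        thus "\<phi> i (s c x) = s c (\<phi> i x)"
          using phi_eq[OF i] \<open>spec i x X\<close> by metis
      qed
      fix x k
      obtain X where "spec i k X" using sp[OF i] by blast
      hence "spec i (\<rho> x k) (\<lambda>v. \<rho> x (X v))" unfolding spec_def by (auto intro: ocomp simp: lin_zero[OF lin])
      thus "\<phi> i (\<rho> x k) = \<rho> x (\<phi> i k)"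
        using phi_eq[OF i] \<open>spec i k X\<close> by metis
    qed
    then obtain a where a: "\<And>i k. i \<in> S' \<Longrightarrow> \<phi> i k = s (a i) k" by metis
    define Xi where "Xi i = (SOME X. spec i i X)" for i
    have Xi: "spec i i (Xi i)" if "i \<in> S'" for i unfolding Xi_def by (rule sp[OF that])
    define Y where "Y v = v - (\<Sum>i\<in>S'. Xi i v)" for v
    have Yops: "Y \<in> ops" unfolding Y_def[abs_def]
      by (rule ops_diff[OF oid ops_sum[OF fS']]) (use Xi in \<open>auto simp: spec_def\<close>)
    have "\<forall>j\<in>S'. Y j = 0"
    proof
      fix j assume j: "j \<in> S'"
      have "(\<Sum>i\<in>S'. Xi i j) = Xi j j + (\<Sum>i\<in>S' - {j}. Xi i j)"
        using fS' j by (simp add: sum.remove)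
      also have "\<dots> = j" using Xi j by (auto simp: spec_def intro!: sum.neutral)
      finally show "Y j = 0" unfolding Y_def by simp
    qed
    hence "Y h = 0" by (rule kill[OF Yops])
    hence "h = (\<Sum>i\<in>S'. Xi i h)" unfolding Y_def by simp
    also have "\<dots> = (\<Sum>i\<in>S'. s (a i) i)"
    proof (rule sum.cong[OF refl])
      fix i assume i: "i \<in> S'"
      have "\<phi> i i = Xi i h" by (rule phi_eq[OF i Xi[OF i]])
      thus "Xi i h = s (a i) i" using a[OF i] by simp
    qed
    also have "\<dots> \<in> V.span S'" by (intro V.span_sum V.span_scale V.span_base)
    finally have "h \<in> V.span S'" .
    thus False using less.prems(2,3) unfolding S'_def V.dependent_def by blast
  qed
qed

lemma dens:
  assumes simp: "simple_rep s \<rho>" and cnt: "countable (UNIV :: 'b set)"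
    and S: "finite S" "V.independent S" "h \<in> S"
  shows "\<exists>X\<in>ops. X h = k \<and> (\<forall>h'\<in>S - {h}. X h' = 0)"
  by (rule dens_from_sep[OF simp sep[OF simp cnt S]])

end



lemma cnt_Hbasis: "countable (UNIV :: Hbasis set)"
proof -
  have "UNIV = insert Hz (range Hi)" by (metis (full_types) Hbasis.exhaust UNIV_eq_I insertCI rangeI)
  moreover have "countable (range Hi)" by (rule countable_image) (rule countableI_type)
  ultimately show ?thesis by (metis countable_insert)
qed

fun emb :: "Hbasis \<Rightarrow> Lbasis" where
  "emb (Hi n) = LI n" | "emb Hz = Lz3"

locale side =
  fixes sV :: "complex \<Rightarrow> 'v \<Rightarrow> 'v::ab_group_add" and \<rho>V :: "Virbasis \<Rightarrow> 'v \<Rightarrow> 'v"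
    and sH :: "complex \<Rightarrow> 'h \<Rightarrow> 'h::ab_group_add" and \<rho>H :: "Hbasis \<Rightarrow> 'h \<Rightarrow> 'h"
    and c lam :: complex
    and sT :: "complex \<Rightarrow> 't \<Rightarrow> 't::ab_group_add" and tp :: "'v \<Rightarrow> 'h \<Rightarrow> 't"
    and \<rho>T :: "Lbasis \<Rightarrow> 't \<Rightarrow> 't"
  assumes V: "Vir_module sV \<rho>V"
    and H: "H_module sH \<rho>H" "simple_rep sH \<rho>H"
    and Hz: "\<forall>h. \<rho>H Hz h = sH c h"
    and T: "is_tensor_product sV sH sT tp"
           "tensor_action sT tp (VL \<rho>V) (Hlam sH \<rho>H c lam) \<rho>T"
begin

sublocale tens sV sH sT tp by (rule tens.intro[OF T(1)])
sublocale R: repr sH \<rho>H using H(1) unfolding H_module_def repr_def by blast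
sublocale VV: vector_space sV by (rule vsV)
sublocale HH: vector_space sH by (rule vsH)
sublocale TT: vector_space sT by (rule vsT)

lemma linV: "Vector_Spaces.linear sV sV (\<rho>V x)" using V unfolding Vir_module_def by blast
lemma linT: "Vector_Spaces.linear sT sT (\<rho>T x)" using T(2) unfolding tensor_action_def by blast
lemma act: "\<rho>T x (tp v h) = tp (VL \<rho>V x v) h + tp v (Hlam sH \<rho>H c lam x h)"
  using T(2) unfolding tensor_action_def by blast

lemma act_emb: "\<rho>T (emb x) (tp v h) = tp v (\<rho>H x h)"
  by (cases x) (simp_all add: act VL_def Hlam_def Hz)

lemma VL_in: "module.subspace sV V' \<Longrightarrow> (\<forall>y v. v \<in> V' \<longrightarrow> \<rho>V y v \<in> V') \<Longrightarrow> v \<in> V' \<Longrightarrow> VL \<rho>V x v \<in> V'"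
  by (cases x) (auto simp: VL_def VV.subspace_0)


lemma eq_on_T:
  assumes "Vector_Spaces.linear sT sX F1" "Vector_Spaces.linear sT sX F2"
    and "\<And>v h. F1 (tp v h) = F2 (tp v h)"
  shows "F1 t = F2 t"
proof -
  interpret p: vector_space_pair sT sX using assms(1) lin_vs1 lin_vs2 by (simp add: vector_space_pair_def) blast
  show ?thesis by (rule p.linear_eq_on[OF assms(1,2), of t "{tp v h | v h. True}"]) (use spanT assms(3) in auto)
qed


lemma ex_h0: "\<exists>h0::'h. h0 \<noteq> 0" using H(2) unfolding simple_rep_def by blast

definition liftable :: "('h \<Rightarrow> 'h) \<Rightarrow> bool" where
  "liftable X \<longleftrightarrow> (\<exists>Y. Vector_Spaces.linear sT sT Y \<and> (\<forall>v h. Y (tp v h) = tp v (X h)) \<and>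
              (\<forall>U. invariant_subspace sT \<rho>T U \<longrightarrow> (\<forall>u\<in>U. Y u \<in> U)))"

lemma liftable_id: "liftable (\<lambda>h. h)"
  unfolding liftable_def
proof (rule exI[of _ "\<lambda>t. t"], intro conjI)
  show "Vector_Spaces.linear sT sT (\<lambda>t. t)" using TT.linear_id by (simp add: id_def)
qed auto

lemma liftable_comp: "liftable X \<Longrightarrow> liftable (\<lambda>h. \<rho>H x (X h))"
  unfolding liftable_def
proof (elim exE conjE)
  fix Y assume Y: "Vector_Spaces.linear sT sT Y" "\<forall>v h. Y (tp v h) = tp v (X h)"
    "\<forall>U. invariant_subspace sT \<rho>T U \<longrightarrow> (\<forall>u\<in>U. Y u \<in> U)"
  show "\<exists>Y. Vector_Spaces.linear sT sT Y \<and> (\<forall>v h. Y (tp v h) = tp v (\<rho>H x (X h))) \<and>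
              (\<forall>U. invariant_subspace sT \<rho>T U \<longrightarrow> (\<forall>u\<in>U. Y u \<in> U))"
  proof (rule exI[of _ "\<lambda>t. \<rho>T (emb x) (Y t)"], intro conjI)
    show "Vector_Spaces.linear sT sT (\<lambda>t. \<rho>T (emb x) (Y t))"
      using Vector_Spaces.linear_compose[OF Y(1) linT] by (simp add: o_def)
    show "\<forall>v h. \<rho>T (emb x) (Y (tp v h)) = tp v (\<rho>H x (X h))" using Y(2) by (simp add: act_emb)
    show "\<forall>U. invariant_subspace sT \<rho>T U \<longrightarrow> (\<forall>u\<in>U. \<rho>T (emb x) (Y u) \<in> U)"
      using Y(3) unfolding invariant_subspace_def by blast
  qed
qed

lemma liftable_add: "liftable X1 \<Longrightarrow> liftable X2 \<Longrightarrow> liftable (\<lambda>h. X1 h + X2 h)"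
  unfolding liftable_def
proof (elim exE conjE)
  fix Y1 Y2 assume Y1: "Vector_Spaces.linear sT sT Y1" "\<forall>v h. Y1 (tp v h) = tp v (X1 h)"
    "\<forall>U. invariant_subspace sT \<rho>T U \<longrightarrow> (\<forall>u\<in>U. Y1 u \<in> U)"
    and Y2: "Vector_Spaces.linear sT sT Y2" "\<forall>v h. Y2 (tp v h) = tp v (X2 h)"
    "\<forall>U. invariant_subspace sT \<rho>T U \<longrightarrow> (\<forall>u\<in>U. Y2 u \<in> U)"
  show "\<exists>Y. Vector_Spaces.linear sT sT Y \<and> (\<forall>v h. Y (tp v h) = tp v (X1 h + X2 h)) \<and>
              (\<forall>U. invariant_subspace sT \<rho>T U \<longrightarrow> (\<forall>u\<in>U. Y u \<in> U))"
  proof (rule exI[of _ "\<lambda>t. Y1 t + Y2 t"], intro conjI)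
    show "Vector_Spaces.linear sT sT (\<lambda>t. Y1 t + Y2 t)"
      unfolding Vector_Spaces.linear_iff
      by (simp add: vsT lin_add[OF Y1(1)] lin_add[OF Y2(1)] lin_scale[OF Y1(1)] lin_scale[OF Y2(1)]
          TT.scale_right_distrib)
    show "\<forall>v h. Y1 (tp v h) + Y2 (tp v h) = tp v (X1 h + X2 h)" using Y1(2) Y2(2) by (simp add: tp_add2)
    show "\<forall>U. invariant_subspace sT \<rho>T U \<longrightarrow> (\<forall>u\<in>U. Y1 u + Y2 u \<in> U)"
      using Y1(3) Y2(3) unfolding invariant_subspace_def TT.subspace_def by blast
  qed
qed

lemma liftable_scale: "liftable X \<Longrightarrow> liftable (\<lambda>h. sH a (X h))"
  unfolding liftable_def
proof (elim exE conjE)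
  fix Y assume Y: "Vector_Spaces.linear sT sT Y" "\<forall>v h. Y (tp v h) = tp v (X h)"
    "\<forall>U. invariant_subspace sT \<rho>T U \<longrightarrow> (\<forall>u\<in>U. Y u \<in> U)"
  show "\<exists>Y. Vector_Spaces.linear sT sT Y \<and> (\<forall>v h. Y (tp v h) = tp v (sH a (X h))) \<and>
              (\<forall>U. invariant_subspace sT \<rho>T U \<longrightarrow> (\<forall>u\<in>U. Y u \<in> U))"
  proof (rule exI[of _ "\<lambda>t. sT a (Y t)"], intro conjI)
    show "Vector_Spaces.linear sT sT (\<lambda>t. sT a (Y t))"
      using Vector_Spaces.linear_compose[OF Y(1) TT.linear_scale_self] by (simp add: o_def)
    show "\<forall>v h. sT a (Y (tp v h)) = tp v (sH a (X h))" using Y(2) by (simp add: tp_scale2)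
    show "\<forall>U. invariant_subspace sT \<rho>T U \<longrightarrow> (\<forall>u\<in>U. sT a (Y u) \<in> U)"
      using Y(3) unfolding invariant_subspace_def TT.subspace_def by blast
  qed
qed

lemma lift_ops: "X \<in> R.ops \<Longrightarrow> liftable X"
  by (induction rule: R.ops.induct)
    (auto intro: liftable_id liftable_comp liftable_add liftable_scale)

lemma part1:
  assumes U: "invariant_subspace sT \<rho>T U"
  shows "\<exists>V'. invariant_subspace sV \<rho>V V' \<and> U = TT.span {tp v h | v h. v \<in> V'}"
proof -
  have Usub: "TT.subspace U" and Uinv: "\<And>x u. u \<in> U \<Longrightarrow> \<rho>T x u \<in> U"
    using U unfolding invariant_subspace_def by auto
  define V' where "V' = {v. \<forall>h. tp v h \<in> U}"
  have sub: "VV.subspace V'"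
    unfolding VV.subspace_def V'_def using Usub unfolding TT.subspace_def
    by (simp add: tp_add1 tp_scale1)
  have inv: "\<rho>V y v \<in> V'" if v: "v \<in> V'" for y v
  proof -
    have "tp (\<rho>V y v) h \<in> U" for h
    proof -
      define x where "x = (case y of Vd n \<Rightarrow> Ld n | Vz \<Rightarrow> Lz1)"
      have "VL \<rho>V x v = \<rho>V y v" unfolding x_def by (cases y) (simp_all add: VL_def)
      hence "tp (\<rho>V y v) h = \<rho>T x (tp v h) - tp v (Hlam sH \<rho>H c lam x h)" by (simp add: act)
      moreover have "\<rho>T x (tp v h) \<in> U" using Uinv v V'_def by blast
      moreover have "tp v (Hlam sH \<rho>H c lam x h) \<in> U" using v V'_def by blast
      ultimately show ?thesis using TT.subspace_diff[OF Usub] by simp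
    qed
    thus ?thesis unfolding V'_def by blast
  qed
  have "U = TT.span {tp v h | v h. v \<in> V'}"
  proof
    show "TT.span {tp v h | v h. v \<in> V'} \<subseteq> U"
      by (rule TT.span_minimal[OF _ Usub]) (auto simp: V'_def)
    show "U \<subseteq> TT.span {tp v h | v h. v \<in> V'}"
    proof
      fix u assume u: "u \<in> U"
      interpret sw: tens sH sV sT "\<lambda>h v. tp v h" by (rule swap)
      obtain B g where B: "finite B" "module.independent sH B" "u = (\<Sum>b\<in>B. tp (g b) b)"
        using sw.indep_rep[of u] by blast
      have gV: "g b \<in> V'" if b: "b \<in> B" for b
      proof -
        have "tp (g b) k \<in> U" for k
        proof -
          obtain X where X: "X \<in> R.ops" "X b = k" "\<forall>h'\<in>B - {b}. X h' = 0"
            using R.dens[OF H(2) cnt_Hbasis B(1,2) b] by blast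
          obtain Y where Y: "Vector_Spaces.linear sT sT Y" "\<forall>v h. Y (tp v h) = tp v (X h)"
            "\<forall>U. invariant_subspace sT \<rho>T U \<longrightarrow> (\<forall>u\<in>U. Y u \<in> U)"
            using lift_ops[OF X(1)] unfolding liftable_def by blast
          have "Y u = (\<Sum>b'\<in>B. tp (g b') (X b'))" using B(3) by (simp add: lin_sum[OF Y(1)] Y(2))
          also have "\<dots> = tp (g b) (X b) + (\<Sum>b'\<in>B - {b}. tp (g b') (X b'))"
            using B(1) b by (simp add: sum.remove)
          also have "\<dots> = tp (g b) k" using X(2,3) by simp
          finally show ?thesis using Y(3) U u by metis
        qed
        thus ?thesis unfolding V'_def by blast
      qed
      show "u \<in> TT.span {tp v h | v h. v \<in> V'}"
        unfolding B(3) by (rule TT.span_sum, rule TT.span_base) (use gV in blast)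
    qed
  qed
  thus ?thesis using sub inv unfolding invariant_subspace_def by blast
qed

lemma prod_functional:
  assumes \<phi>: "Vector_Spaces.linear sV (*) \<phi>" and \<psi>: "Vector_Spaces.linear sH (*) \<psi>"
  shows "\<exists>\<chi>. Vector_Spaces.linear sT (*) \<chi> \<and> (\<forall>v h. \<chi> (tp v h) = \<phi> v * \<psi> h)"
proof (rule univ)
  show "Vector_Spaces.linear sV (*) (\<lambda>v. \<phi> v * \<psi> h)" for h
    unfolding Vector_Spaces.linear_iff
    by (simp add: vsV vs_mult lin_add[OF \<phi>] lin_scale[OF \<phi>] algebra_simps)
  show "Vector_Spaces.linear sH (*) (\<lambda>h. \<phi> v * \<psi> h)" for v
    unfolding Vector_Spaces.linear_iff
    by (simp add: vsH vs_mult lin_add[OF \<psi>] lin_scale[OF \<psi>] algebra_simps)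
qed

lemma span_V'_inv:
  assumes V': "invariant_subspace sV \<rho>V V'"
  shows "invariant_subspace sT \<rho>T (TT.span {tp v h | v h. v \<in> V'})"
  unfolding invariant_subspace_def
proof (intro conjI allI ballI)
  show "TT.subspace (TT.span {tp v h | v h. v \<in> V'})" by simp
  have sub: "VV.subspace V'" and inv: "\<forall>y v. v \<in> V' \<longrightarrow> \<rho>V y v \<in> V'"
    using V' unfolding invariant_subspace_def by auto
  fix x u assume "u \<in> TT.span {tp v h | v h. v \<in> V'}"
  thus "\<rho>T x u \<in> TT.span {tp v h | v h. v \<in> V'}"
  proof (induction rule: TT.span_induct_alt)
    case base
    then show ?case by (simp add: lin_zero[OF linT] TT.span_zero)
  next
    case (step a b y)
    then obtain v h where vh: "b = tp v h" "v \<in> V'" by blast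
    have "VL \<rho>V x v \<in> V'" by (rule VL_in[OF sub inv vh(2)])
    hence "\<rho>T x b \<in> TT.span {tp v h | v h. v \<in> V'}"
      unfolding vh act using vh(2) by (intro TT.span_add TT.span_base) blast+
    thus ?case using step(2) by (simp add: lin_add[OF linT] lin_scale[OF linT] TT.span_add TT.span_scale)
  qed
qed

lemma part1b: "simple_rep sT \<rho>T \<longleftrightarrow> simple_rep sV \<rho>V"
proof -
  obtain h0 :: 'h where h0: "h0 \<noteq> 0" using ex_h0 by blast
  show ?thesis
  proof
    assume sT: "simple_rep sT \<rho>T"
    show "simple_rep sV \<rho>V" unfolding simple_rep_def
    proof (intro conjI allI impI)
      show "\<exists>v::'v. v \<noteq> 0"
      proof (rule ccontr)
        assume "\<not> ?thesis"
        hence all0: "\<And>v::'v. v = 0" by blast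
        have z: "tsum xs = 0" for xs
        proof (induction xs)
          case (Cons p xs)
          then show ?case by (cases p) (metis all0 tp_zero1 tsum_simps(2) add_0)
        qed simp
        obtain t :: 't where "t \<noteq> 0" using sT unfolding simple_rep_def by blast
        thus False using all_tsum z by metis
      qed
      fix V' assume V': "invariant_subspace sV \<rho>V V'"
      have sub: "VV.subspace V'" using V' unfolding invariant_subspace_def by auto
      let ?U = "TT.span {tp v h | v h. v \<in> V'}"
      have "?U = {0} \<or> ?U = UNIV" using sT span_V'_inv[OF V'] unfolding simple_rep_def by blast
      thus "V' = {0} \<or> V' = UNIV"
      proof
        assume U0: "?U = {0}"
        have "v = 0" if "v \<in> V'" for v
        proof -
          have "tp v h0 \<in> ?U" using that by (intro TT.span_base) blast
          thus ?thesis using U0 h0 tp_eq0 by blast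
        qed
        thus ?thesis using VV.subspace_0[OF sub] by blast
      next
        assume U1: "?U = UNIV"
        have "v \<in> V'" for v
        proof (rule ccontr)
          assume v: "v \<notin> V'"
          obtain \<phi> where \<phi>: "Vector_Spaces.linear sV (*) \<phi>" "\<phi> v = 1" "\<forall>x\<in>V'. \<phi> x = 0"
            using functional_quot[OF vsV sub v] by blast
          obtain \<psi> where \<psi>: "Vector_Spaces.linear sH (*) \<psi>" "\<psi> h0 = 1"
            using functional_nonzero[OF vsH h0] by blast
          obtain \<chi> where \<chi>: "Vector_Spaces.linear sT (*) \<chi>" "\<forall>v h. \<chi> (tp v h) = \<phi> v * \<psi> h"
            using prod_functional[OF \<phi>(1) \<psi>(1)] by blast
          interpret p: vector_space_pair sT "(*) :: complex \<Rightarrow> _"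
            using vsT vs_mult by (simp add: vector_space_pair_def)
          have "\<chi> (tp v h0) = 0"
            by (rule p.linear_eq_on[OF \<chi>(1) p.linear_zero, of _ "{tp v h | v h. v \<in> V'}"])
               (use U1 \<chi>(2) \<phi>(3) in auto)
          thus False using \<chi>(2) \<phi>(2) \<psi>(2) by simp
        qed
        thus ?thesis by blast
      qed
    qed
  next
    assume sV: "simple_rep sV \<rho>V"
    show "simple_rep sT \<rho>T" unfolding simple_rep_def
    proof (intro conjI allI impI)
      obtain v0 :: 'v where "v0 \<noteq> 0" using sV unfolding simple_rep_def by blast
      thus "\<exists>t::'t. t \<noteq> 0" using h0 tp_eq0 by blast
      fix U assume U: "invariant_subspace sT \<rho>T U"
      obtain V' where V': "invariant_subspace sV \<rho>V V'" "U = TT.span {tp v h | v h. v \<in> V'}"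
        using part1[OF U] by blast
      have "V' = {0} \<or> V' = UNIV" using sV V'(1) unfolding simple_rep_def by blast
      thus "U = {0} \<or> U = UNIV"
      proof
        assume "V' = {0}"
        hence "{tp v h | v h. v \<in> V'} = {0}" by auto
        thus ?thesis using V'(2) by simp
      next
        assume "V' = UNIV"
        thus ?thesis using V'(2) spanT by simp
      qed
    qed
  qed
qed

end



lemma lin_inv:
  assumes f: "Vector_Spaces.linear s1 s2 f" and b: "bij f"
  shows "Vector_Spaces.linear s2 s1 (inv f)"
proof -
  have inj: "inj f" and surj: "surj f" using b bij_is_inj bij_is_surj by auto
  show ?thesis unfolding Vector_Spaces.linear_iff
  proof (intro conjI allI)
    show "vector_space s2" by (rule lin_vs2[OF f])
    show "vector_space s1" by (rule lin_vs1[OF f])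
    fix x y
    have "f (inv f x + inv f y) = x + y" by (simp add: lin_add[OF f] surj_f_inv_f[OF surj])
    thus "inv f (x + y) = inv f x + inv f y" by (metis inv_f_f[OF inj])
  next
    fix c x
    have "f (s1 c (inv f x)) = s2 c x" by (simp add: lin_scale[OF f] surj_f_inv_f[OF surj])
    thus "inv f (s2 c x) = s1 c (inv f x)" by (metis inv_f_f[OF inj])
  qed
qed

lemma inv_intertwine:
  assumes b: "bij f" and c: "\<And>x v. f (\<rho>1 x v) = \<rho>2 x (f v)"
  shows "inv f (\<rho>2 x w) = \<rho>1 x (inv f w)"
proof -
  have inj: "inj f" and surj: "surj f" using b bij_is_inj bij_is_surj by auto
  have "f (\<rho>1 x (inv f w)) = \<rho>2 x w" by (simp add: c surj_f_inv_f[OF surj])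
  thus ?thesis by (metis inv_f_f[OF inj])
qed

lemma iso_sym: "rep_iso s1 s2 \<rho>1 \<rho>2 \<Longrightarrow> rep_iso s2 s1 \<rho>2 \<rho>1"
  unfolding rep_iso_def
  by (metis lin_inv inv_intertwine bij_imp_bij_inv)

lemma hom_simple_bij:
  fixes s1 :: "complex \<Rightarrow> 'a \<Rightarrow> 'a::ab_group_add" and s2 :: "complex \<Rightarrow> 'b \<Rightarrow> 'b::ab_group_add"
  assumes f: "Vector_Spaces.linear s1 s2 f" and c: "\<And>x v. f (\<rho>1 x v) = \<rho>2 x (f v)"
    and l2: "\<And>x. Vector_Spaces.linear s2 s2 (\<rho>2 x)"
    and s1: "simple_rep s1 \<rho>1" and s2: "simple_rep s2 \<rho>2" and h: "f h \<noteq> 0"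
  shows "bij f"
proof -
  interpret V1: vector_space s1 by (rule lin_vs1[OF f])
  interpret V2: vector_space s2 by (rule lin_vs2[OF f])
  have "invariant_subspace s1 \<rho>1 {v. f v = 0}"
    unfolding invariant_subspace_def V1.subspace_def
    using lin_add[OF f] lin_scale[OF f] lin_zero[OF f] c lin_zero[OF l2] by simp
  moreover have "{v. f v = 0} \<noteq> UNIV" using h by blast
  ultimately have k: "{v. f v = 0} = {0}" using s1 unfolding simple_rep_def by blast
  have inj: "inj f"
  proof (rule injI)
    fix x y assume "f x = f y"
    hence "f (x - y) = 0" by (simp add: lin_diff[OF f])
    hence "x - y \<in> {v. f v = 0}" by simp
    thus "x = y" using k by simp
  qed
  have "invariant_subspace s2 \<rho>2 (range f)"
    unfolding invariant_subspace_def V2.subspace_def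
  proof (intro conjI allI ballI)
    have "f 0 = 0" by (rule lin_zero[OF f])
    thus "0 \<in> range f" by (metis rangeI)
    show "x + y \<in> range f" if xy: "x \<in> range f" "y \<in> range f" for x y
    proof -
      obtain a b where "x = f a" "y = f b" using xy by blast
      hence "x + y = f (a + b)" by (simp add: lin_add[OF f])
      thus ?thesis by blast
    qed
    show "s2 c x \<in> range f" if xr: "x \<in> range f" for c x
    proof -
      obtain a where "x = f a" using xr by blast
      hence "s2 c x = f (s1 c a)" by (simp add: lin_scale[OF f])
      thus ?thesis by blast
    qed
    show "\<rho>2 x u \<in> range f" if ur: "u \<in> range f" for x u
    proof -
      obtain a where "u = f a" using ur by blast
      hence "\<rho>2 x u = f (\<rho>1 x a)" by (simp add: c)
      thus ?thesis by blast
    qed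
  qed
  moreover have "range f \<noteq> {0}" using h by blast
  ultimately have "surj f" using s2 unfolding simple_rep_def by blast
  thus ?thesis using inj by (simp add: bij_def)
qed

lemma VL_intertwine:
  assumes f: "Vector_Spaces.linear s1 s2 f" and c: "\<And>x v. f (\<rho>1 x v) = \<rho>2 x (f v)"
  shows "f (VL \<rho>1 x v) = VL \<rho>2 x (f v)"
  by (cases x) (simp_all add: VL_def c lin_zero[OF f])

lemma Hlam_intertwine:
  assumes g: "Vector_Spaces.linear sH sK g" and inj: "inj g"
    and c: "\<And>x v. g (\<rho>H x v) = \<rho>K x (g v)"
  shows "g (Hlam sH \<rho>H d lam x h) = Hlam sK \<rho>K d lam x (g h)"
proof -
  have nord: "g (nord \<rho>H a b v) = nord \<rho>K a b (g v)" for a b v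
    by (simp add: nord_def c)
  have g0: "g v = 0 \<longleftrightarrow> v = 0" for v
    using inj lin_zero[OF g] by (metis injD)
  have sug: "g (sug_sum \<rho>H k v) = sug_sum \<rho>K k (g v)" for k v
  proof -
    have "{i. nord \<rho>K (- i) (i + k) (g v) \<noteq> 0} = {i. nord \<rho>H (- i) (i + k) v \<noteq> 0}"
      by (simp add: nord[symmetric] g0)
    thus ?thesis unfolding sug_sum_def by (simp add: lin_sum[OF g] nord)
  qed
  show ?thesis
    by (cases x) (simp_all add: Hlam_def lin_add[OF g] lin_scale[OF g] sug c)
qed

context side begin

lemma Lz2_T: "\<rho>T Lz2 t = sT lam t"
  by (rule eq_on_T[OF linT TT.linear_scale_self]) (simp add: act VL_def Hlam_def tp_scale2)

lemma Lz3_T: "\<rho>T Lz3 t = sT c t"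
  by (rule eq_on_T[OF linT TT.linear_scale_self]) (simp add: act VL_def Hlam_def tp_scale2)

lemma proj:
  assumes \<phi>: "Vector_Spaces.linear sV (*) \<phi>"
  shows "\<exists>P. Vector_Spaces.linear sT sH P \<and> (\<forall>v h. P (tp v h) = sH (\<phi> v) h)"
proof (rule lift[OF vsH])
  show "Vector_Spaces.linear sV sH (\<lambda>v. sH (\<phi> v) h)" for h
    unfolding Vector_Spaces.linear_iff
    by (simp add: vsV vsH lin_add[OF \<phi>] lin_scale[OF \<phi>] R.V.scale_left_distrib)
  show "Vector_Spaces.linear sH sH (sH (\<phi> v))" for v
    by (rule R.V.linear_scale_self)
qed

lemma proj_intertwine:
  assumes P: "Vector_Spaces.linear sT sH P" "\<forall>v h. P (tp v h) = sH (\<phi> v) h"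
  shows "P (\<rho>T (emb x) t) = \<rho>H x (P t)"
proof -
  have "Vector_Spaces.linear sT sH (\<lambda>t. P (\<rho>T (emb x) t))"
    using Vector_Spaces.linear_compose[OF linT P(1)] by (simp add: o_def)
  moreover have "Vector_Spaces.linear sT sH (\<lambda>t. \<rho>H x (P t))"
    using Vector_Spaces.linear_compose[OF P(1) R.lin] by (simp add: o_def)
  ultimately show ?thesis
    by (rule eq_on_T) (simp add: act_emb P(2) lin_scale[OF R.lin])
qed

end

locale two = A: side sV \<rho>V sH \<rho>H c lam sT tp \<rho>T + B: side sW \<rho>W sK \<rho>K d \<mu> sS tp' \<rho>S
  for sV :: "complex \<Rightarrow> 'v \<Rightarrow> 'v::ab_group_add" and \<rho>V
    and sH :: "complex \<Rightarrow> 'h \<Rightarrow> 'h::ab_group_add" and \<rho>H and c lam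
    and sT :: "complex \<Rightarrow> 't \<Rightarrow> 't::ab_group_add" and tp \<rho>T
    and sW :: "complex \<Rightarrow> 'w \<Rightarrow> 'w::ab_group_add" and \<rho>W
    and sK :: "complex \<Rightarrow> 'k \<Rightarrow> 'k::ab_group_add" and \<rho>K and d \<mu>
    and sS :: "complex \<Rightarrow> 'u \<Rightarrow> 'u::ab_group_add" and tp' \<rho>S
begin

lemma iso_back:
  assumes f: "rep_iso sV sW \<rho>V \<rho>W" and g: "rep_iso sH sK \<rho>H \<rho>K" and lm: "lam = \<mu>"
  shows "rep_iso sT sS \<rho>T \<rho>S"
proof -
  obtain f where f: "Vector_Spaces.linear sV sW f" "bij f" "\<And>x v. f (\<rho>V x v) = \<rho>W x (f v)"
    using f unfolding rep_iso_def by blast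
  obtain g where g: "Vector_Spaces.linear sH sK g" "bij g" "\<And>x v. g (\<rho>H x v) = \<rho>K x (g v)"
    using g unfolding rep_iso_def by blast
  have injf: "inj f" and surjf: "surj f" using f(2) bij_is_inj bij_is_surj by auto
  have injg: "inj g" and surjg: "surj g" using g(2) bij_is_inj bij_is_surj by auto
  obtain h0 :: 'h where h0: "h0 \<noteq> 0" using A.ex_h0 by blast
  have gh0: "g h0 \<noteq> 0" using h0 injg lin_zero[OF g(1)] by (metis injD)
  have "sK c (g h0) = sK d (g h0)"
    using g(3)[of Hz h0] A.Hz B.Hz lin_scale[OF g(1)] by simp
  hence cd: "c = d" using gh0 by simp
  obtain F where F: "Vector_Spaces.linear sT sS F" "\<forall>v h. F (tp v h) = tp' (f v) (g h)"
  proof -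
    have "\<exists>F. Vector_Spaces.linear sT sS F \<and> (\<forall>v h. F (tp v h) = tp' (f v) (g h))"
    proof (rule A.lift[OF B.vsT])
      show "Vector_Spaces.linear sV sS (\<lambda>v. tp' (f v) (g h))" for h
        using Vector_Spaces.linear_compose[OF f(1) B.lin1] by (simp add: o_def)
      show "Vector_Spaces.linear sH sS (\<lambda>h. tp' (f v) (g h))" for v
        using Vector_Spaces.linear_compose[OF g(1) B.lin2] by (simp add: o_def)
    qed
    thus ?thesis using that by blast
  qed
  obtain G where G: "Vector_Spaces.linear sS sT G" "\<forall>w k. G (tp' w k) = tp (inv f w) (inv g k)"
  proof -
    have "\<exists>G. Vector_Spaces.linear sS sT G \<and> (\<forall>w k. G (tp' w k) = tp (inv f w) (inv g k))"
    proof (rule B.lift[OF A.vsT])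
      show "Vector_Spaces.linear sW sT (\<lambda>w. tp (inv f w) (inv g k))" for k
        using Vector_Spaces.linear_compose[OF lin_inv[OF f(1,2)] A.lin1] by (simp add: o_def)
      show "Vector_Spaces.linear sK sT (\<lambda>k. tp (inv f w) (inv g k))" for w
        using Vector_Spaces.linear_compose[OF lin_inv[OF g(1,2)] A.lin2] by (simp add: o_def)
    qed
    thus ?thesis using that by blast
  qed
  have GF: "G (F t) = t" for t
  proof (rule A.eq_on_T)
    show "Vector_Spaces.linear sT sT (\<lambda>t. G (F t))"
      using Vector_Spaces.linear_compose[OF F(1) G(1)] by (simp add: o_def)
    show "Vector_Spaces.linear sT sT (\<lambda>t. t)" using A.TT.linear_id by (simp add: id_def)
    show "G (F (tp v h)) = tp v h" for v h by (simp add: F(2) G(2) inv_f_f[OF injf] inv_f_f[OF injg])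
  qed
  have FG: "F (G u) = u" for u
  proof (rule B.eq_on_T)
    show "Vector_Spaces.linear sS sS (\<lambda>t. F (G t))"
      using Vector_Spaces.linear_compose[OF G(1) F(1)] by (simp add: o_def)
    show "Vector_Spaces.linear sS sS (\<lambda>t. t)" using B.TT.linear_id by (simp add: id_def)
    show "F (G (tp' v h)) = tp' v h" for v h
      by (simp add: F(2) G(2) surj_f_inv_f[OF surjf] surj_f_inv_f[OF surjg])
  qed
  have bF: "bij F"
  proof (rule bijI)
    show "inj F" by (rule inj_on_inverseI[of _ G]) (rule GF)
    show "surj F" by (rule surjI[of F G]) (rule FG)
  qed
  have cF: "F (\<rho>T x t) = \<rho>S x (F t)" for x t
  proof (rule A.eq_on_T)
    show "Vector_Spaces.linear sT sS (\<lambda>t. F (\<rho>T x t))"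
      using Vector_Spaces.linear_compose[OF A.linT F(1)] by (simp add: o_def)
    show "Vector_Spaces.linear sT sS (\<lambda>t. \<rho>S x (F t))"
      using Vector_Spaces.linear_compose[OF F(1) B.linT] by (simp add: o_def)
    fix v h
    have "F (\<rho>T x (tp v h)) = tp' (f (VL \<rho>V x v)) (g h) + tp' (f v) (g (Hlam sH \<rho>H c lam x h))"
      by (simp add: A.act lin_add[OF F(1)] F(2))
    also have "\<dots> = tp' (VL \<rho>W x (f v)) (g h) + tp' (f v) (Hlam sK \<rho>K c lam x (g h))"
    proof -
      have e1: "f (VL \<rho>V x v) = VL \<rho>W x (f v)" by (rule VL_intertwine[OF f(1)]) (rule f(3))
      have e2: "g (Hlam sH \<rho>H c lam x h) = Hlam sK \<rho>K c lam x (g h)"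
        by (rule Hlam_intertwine[OF g(1) injg]) (rule g(3))
      show ?thesis by (simp only: e1 e2)
    qed
    also have "\<dots> = \<rho>S x (F (tp v h))"
      using B.act[of x "f v" "g h"] F(2) cd lm by simp
    finally show "F (\<rho>T x (tp v h)) = \<rho>S x (F (tp v h))" .
  qed
  show ?thesis unfolding rep_iso_def using F(1) bF cF by blast
qed


lemma scal_eq:
  fixes v0 :: 'v
  assumes F: "Vector_Spaces.linear sT sS F" "bij F" "\<And>x t. F (\<rho>T x t) = \<rho>S x (F t)"
    and v0: "v0 \<noteq> 0"
  shows "lam = \<mu> \<and> c = d"
proof -
  obtain h0 :: 'h where h0: "h0 \<noteq> 0" using A.ex_h0 by blast
  have t0: "tp v0 h0 \<noteq> 0" using v0 h0 A.tp_eq0 by blast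
  have Ft0: "F (tp v0 h0) \<noteq> 0" using t0 F(2) lin_zero[OF F(1)] by (metis bij_is_inj injD)
  have "sS lam (F (tp v0 h0)) = sS \<mu> (F (tp v0 h0))"
    using F(3)[of Lz2 "tp v0 h0"] by (simp add: A.Lz2_T B.Lz2_T lin_scale[OF F(1)])
  moreover have "sS c (F (tp v0 h0)) = sS d (F (tp v0 h0))"
    using F(3)[of Lz3 "tp v0 h0"] by (simp add: A.Lz3_T B.Lz3_T lin_scale[OF F(1)])
  ultimately show ?thesis using Ft0 by simp
qed

lemma H_fwd:
  fixes v0 :: 'v
  assumes F: "Vector_Spaces.linear sT sS F" "bij F" "\<And>x t. F (\<rho>T x t) = \<rho>S x (F t)"
    and v0: "v0 \<noteq> 0"
  shows "rep_iso sH sK \<rho>H \<rho>K"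
proof -
  obtain h0 :: 'h where h0: "h0 \<noteq> 0" using A.ex_h0 by blast
  have t0: "tp v0 h0 \<noteq> 0" using v0 h0 A.tp_eq0 by blast
  have Ft0: "F (tp v0 h0) \<noteq> 0" using t0 F(2) lin_zero[OF F(1)] by (metis bij_is_inj injD)
  obtain BB k where BB: "finite BB" "module.independent sW BB"
    "F (tp v0 h0) = (\<Sum>b\<in>BB. tp' b (k b))" using B.indep_rep by blast
  obtain b where b: "b \<in> BB" "k b \<noteq> 0"
  proof (rule ccontr)
    assume "\<not> thesis"
    hence "\<forall>b\<in>BB. k b = 0" using that by blast
    hence "F (tp v0 h0) = 0" unfolding BB(3) by simp
    thus False using Ft0 by simp
  qed
  obtain \<phi> where \<phi>: "Vector_Spaces.linear sW (*) \<phi>" "\<phi> b = 1" "\<forall>b'\<in>BB. b' \<noteq> b \<longrightarrow> \<phi> b' = 0"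
    using functional_dual[OF B.vsV BB(2) b(1)] by blast
  obtain P where P: "Vector_Spaces.linear sS sK P" "\<forall>w k. P (tp' w k) = sK (\<phi> w) k"
    using B.proj[OF \<phi>(1)] by blast
  define \<gamma> where "\<gamma> h = P (F (tp v0 h))" for h
  have lg: "Vector_Spaces.linear sH sK \<gamma>"
    unfolding \<gamma>_def using Vector_Spaces.linear_compose[OF Vector_Spaces.linear_compose[OF A.lin2 F(1)] P(1)]
    by (simp add: o_def)
  have cg: "\<gamma> (\<rho>H x h) = \<rho>K x (\<gamma> h)" for x h
    unfolding \<gamma>_def by (simp add: A.act_emb[symmetric] F(3) B.proj_intertwine[OF P])
  have "\<gamma> h0 = (\<Sum>b'\<in>BB. sK (\<phi> b') (k b'))"
    unfolding \<gamma>_def BB(3) by (simp add: lin_sum[OF P(1)] P(2))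
  also have "\<dots> = sK (\<phi> b) (k b)"
    using BB(1) b(1) \<phi>(3) by (subst sum.remove[of BB b]) (auto intro!: sum.neutral)
  finally have "\<gamma> h0 \<noteq> 0" using \<phi>(2) b(2) by simp
  hence "bij \<gamma>" using hom_simple_bij[OF lg cg B.R.lin A.H(2) B.H(2)] by blast
  thus ?thesis unfolding rep_iso_def using lg cg by blast
qed

lemma alpha:
  assumes g: "Vector_Spaces.linear sH sK g" "bij g" "\<And>x v. g (\<rho>H x v) = \<rho>K x (g v)"
    and al: "Vector_Spaces.linear sH sS \<alpha>" "\<And>x h. \<alpha> (\<rho>H x h) = \<rho>S (emb x) (\<alpha> h)"
  shows "\<exists>w. \<forall>h. \<alpha> h = tp' w (g h)"
proof -
  obtain h0 :: 'h where h0: "h0 \<noteq> 0" using A.ex_h0 by blast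
  have injg: "inj g" and surjg: "surj g" using g(2) bij_is_inj bij_is_surj by auto
  obtain BB k where BB: "finite BB" "module.independent sW BB"
    "\<alpha> h0 = (\<Sum>b\<in>BB. tp' b (k b))" using B.indep_rep by blast
  have "\<exists>a. k b = sK a (g h0)" if b: "b \<in> BB" for b
  proof -
    obtain \<phi> where \<phi>: "Vector_Spaces.linear sW (*) \<phi>" "\<phi> b = 1" "\<forall>b'\<in>BB. b' \<noteq> b \<longrightarrow> \<phi> b' = 0"
      using functional_dual[OF B.vsV BB(2) b] by blast
    obtain P where P: "Vector_Spaces.linear sS sK P" "\<forall>w k. P (tp' w k) = sK (\<phi> w) k"
      using B.proj[OF \<phi>(1)] by blast
    define \<kappa> where "\<kappa> y = P (\<alpha> (inv g y))" for y
    have lk: "Vector_Spaces.linear sK sK \<kappa>"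
      unfolding \<kappa>_def using Vector_Spaces.linear_compose[OF Vector_Spaces.linear_compose[OF lin_inv[OF g(1,2)] al(1)] P(1)]
      by (simp add: o_def)
    have ck: "\<kappa> (\<rho>K x y) = \<rho>K x (\<kappa> y)" for x y
    proof -
      have "inv g (\<rho>K x y) = \<rho>H x (inv g y)" by (rule inv_intertwine[OF g(2)]) (rule g(3))
      hence "\<kappa> (\<rho>K x y) = P (\<rho>S (emb x) (\<alpha> (inv g y)))" unfolding \<kappa>_def by (simp only: al(2))
      also have "\<dots> = \<rho>K x (\<kappa> y)" unfolding \<kappa>_def by (rule B.proj_intertwine[OF P])
      finally show ?thesis .
    qed
    obtain a where a: "\<forall>y. \<kappa> y = sK a y" using B.R.schur[OF B.H(2) cnt_Hbasis lk ck] by blast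
    have "\<kappa> (g h0) = P (\<alpha> h0)" unfolding \<kappa>_def by (simp only: inv_f_f[OF injg])
    also have "\<dots> = (\<Sum>b'\<in>BB. P (tp' b' (k b')))" by (simp only: BB(3) lin_sum[OF P(1)])
    also have "\<dots> = (\<Sum>b'\<in>BB. sK (\<phi> b') (k b'))" using P(2) by simp
    also have "\<dots> = sK (\<phi> b) (k b)"
      using BB(1) b \<phi>(3) by (subst sum.remove[of BB b]) (auto intro!: sum.neutral)
    finally have "k b = \<kappa> (g h0)" using \<phi>(2) by simp
    thus ?thesis using a by (intro exI[of _ a]) simp
  qed
  hence "\<forall>b\<in>BB. \<exists>a. k b = sK a (g h0)" by blast
  from bchoice[OF this] obtain a where a: "\<forall>b\<in>BB. k b = sK (a b) (g h0)" by blast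
  define w where "w = (\<Sum>b\<in>BB. sW (a b) b)"
  have "\<alpha> h0 = (\<Sum>b\<in>BB. tp' (sW (a b) b) (g h0))"
    unfolding BB(3) by (rule sum.cong[OF refl]) (simp add: a B.tp_scale1 B.tp_scale2)
  also have "\<dots> = tp' w (g h0)" unfolding w_def by (rule B.tp_sum1[symmetric])
  finally have h0w: "\<alpha> h0 = tp' w (g h0)" .
  have ops: "\<alpha> (X h0) = tp' w (g (X h0))" if "X \<in> A.R.ops" for X
    using that
  proof (induction rule: A.R.ops.induct)
    case oid
    then show ?case by (rule h0w)
  next
    case (ocomp X x)
    have "\<alpha> (\<rho>H x (X h0)) = \<rho>S (emb x) (tp' w (g (X h0)))" by (simp only: al(2) ocomp.IH)
    also have "\<dots> = tp' w (g (\<rho>H x (X h0)))" by (simp only: B.act_emb g(3))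
    finally show ?case .
  next
    case (oadd X Y)
    show ?case by (simp only: lin_add[OF al(1)] oadd.IH lin_add[OF g(1)] B.tp_add2)
  next
    case (oscale X c)
    show ?case by (simp only: lin_scale[OF al(1)] oscale.IH lin_scale[OF g(1)] B.tp_scale2)
  qed
  have "\<alpha> h = tp' w (g h)" for h
  proof -
    obtain X where "X \<in> A.R.ops" "X h0 = h" using A.R.orbit[OF A.H(2) h0] by blast
    thus ?thesis using ops by blast
  qed
  thus ?thesis by blast
qed

lemma uniq:
  assumes g: "bij g" "Vector_Spaces.linear sH sK g" and e: "\<And>h. tp' w (g h) = tp' w' (g h)"
  shows "w = w'"
proof -
  obtain h0 :: 'h where h0: "h0 \<noteq> 0" using A.ex_h0 by blast
  have "g h0 \<noteq> 0" using h0 g lin_zero[OF g(2)] by (metis bij_is_inj injD)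
  thus ?thesis using B.tp_inj1 e by blast
qed

lemma Phi_exists:
  assumes F: "Vector_Spaces.linear sT sS F" "\<And>x t. F (\<rho>T x t) = \<rho>S x (F t)"
    and g: "Vector_Spaces.linear sH sK g" "bij g" "\<And>x v. g (\<rho>H x v) = \<rho>K x (g v)"
  shows "\<exists>\<Phi>. Vector_Spaces.linear sV sW \<Phi> \<and> (\<forall>v h. F (tp v h) = tp' (\<Phi> v) (g h))"
proof -
  have "\<exists>w. \<forall>h. F (tp v h) = tp' w (g h)" for v
  proof (rule alpha[OF g])
    show "Vector_Spaces.linear sH sS (\<lambda>h. F (tp v h))"
      using Vector_Spaces.linear_compose[OF A.lin2 F(1)] by (simp add: o_def)
    show "F (tp v (\<rho>H x h)) = \<rho>S (emb x) (F (tp v h))" for x h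
      by (simp add: A.act_emb[symmetric] F(2))
  qed
  then obtain \<Phi> where \<Phi>: "\<And>v h. F (tp v h) = tp' (\<Phi> v) (g h)" by metis
  have "Vector_Spaces.linear sV sW \<Phi>"
    unfolding Vector_Spaces.linear_iff
  proof (intro conjI allI)
    show "vector_space sV" by (rule A.vsV)
    show "vector_space sW" by (rule B.vsV)
    fix x y
    show "\<Phi> (x + y) = \<Phi> x + \<Phi> y"
      by (rule uniq[OF g(2,1)]) (metis \<Phi> A.tp_add1 B.tp_add1 lin_add[OF F(1)])
  next
    fix a x
    show "\<Phi> (sV a x) = sW a (\<Phi> x)"
      by (rule uniq[OF g(2,1)]) (metis \<Phi> A.tp_scale1 B.tp_scale1 lin_scale[OF F(1)])
  qed
  thus ?thesis using \<Phi> by blast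
qed

lemma V_iso:
  assumes F: "Vector_Spaces.linear sT sS F" "bij F" "\<And>x t. F (\<rho>T x t) = \<rho>S x (F t)"
    and g: "Vector_Spaces.linear sH sK g" "bij g" "\<And>x v. g (\<rho>H x v) = \<rho>K x (g v)"
    and cd: "c = d" and lm: "lam = \<mu>"
    and \<Phi>: "Vector_Spaces.linear sV sW \<Phi>" "\<And>v h. F (tp v h) = tp' (\<Phi> v) (g h)"
    and \<Psi>: "\<And>w k. inv F (tp' w k) = tp (\<Psi> w) (inv g k)"
  shows "rep_iso sV sW \<rho>V \<rho>W"
proof -
  obtain h0 :: 'h where h0: "h0 \<noteq> 0" using A.ex_h0 by blast
  have injg: "inj g" and injF: "inj F" and surjF: "surj F" using g(2) F(2) bij_is_inj bij_is_surj by auto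
  have cP: "\<Phi> (\<rho>V x v) = \<rho>W x (\<Phi> v)" for x v
  proof (rule uniq[OF g(2,1)])
    fix h
    define y where "y = (case x of Vd n \<Rightarrow> Ld n | Vz \<Rightarrow> Lz1)"
    have y1: "VL \<rho>V y v = \<rho>V x v" unfolding y_def by (cases x) (simp_all add: VL_def)
    have y2: "VL \<rho>W y (\<Phi> v) = \<rho>W x (\<Phi> v)" unfolding y_def by (cases x) (simp_all add: VL_def)
    have e2: "g (Hlam sH \<rho>H c lam y h) = Hlam sK \<rho>K c lam y (g h)"
      by (rule Hlam_intertwine[OF g(1) injg]) (rule g(3))
    have "tp (\<rho>V x v) h = \<rho>T y (tp v h) - tp v (Hlam sH \<rho>H c lam y h)"
      using A.act[of y v h] y1 by simp
    hence "F (tp (\<rho>V x v) h) = \<rho>S y (tp' (\<Phi> v) (g h)) - tp' (\<Phi> v) (Hlam sK \<rho>K c lam y (g h))"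
      by (simp add: lin_diff[OF F(1)] F(3) \<Phi>(2) e2)
    also have "\<dots> = tp' (\<rho>W x (\<Phi> v)) (g h)"
      using B.act[of y "\<Phi> v" "g h"] y2 cd lm by simp
    finally show "tp' (\<Phi> (\<rho>V x v)) (g h) = tp' (\<rho>W x (\<Phi> v)) (g h)" using \<Phi>(2) by simp
  qed
  have "inj \<Phi>"
  proof (rule injI)
    fix v v' assume "\<Phi> v = \<Phi> v'"
    hence "F (tp v h0) = F (tp v' h0)" using \<Phi>(2) by simp
    hence "tp v h0 = tp v' h0" using injF by (simp add: inj_eq)
    thus "v = v'" using A.tp_inj1 h0 by blast
  qed
  moreover have "surj \<Phi>"
  proof (rule surjI)
    fix w
    show "\<Phi> (\<Psi> w) = w"
    proof (rule uniq[OF g(2,1)])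
      fix h
      have "tp (\<Psi> w) h = inv F (tp' w (g h))" using \<Psi>[of w "g h"] inv_f_f[OF injg] by simp
      hence "F (tp (\<Psi> w) h) = tp' w (g h)" using surj_f_inv_f[OF surjF] by simp
      thus "tp' (\<Phi> (\<Psi> w)) (g h) = tp' w (g h)" using \<Phi>(2) by simp
    qed
  qed
  ultimately show ?thesis unfolding rep_iso_def using \<Phi>(1) cP by (blast intro: bijI)
qed

end


theorem theorem11:
  fixes sV :: "complex \<Rightarrow> 'v \<Rightarrow> 'v::ab_group_add"
    and sW :: "complex \<Rightarrow> 'w \<Rightarrow> 'w::ab_group_add"
    and sH :: "complex \<Rightarrow> 'h \<Rightarrow> 'h::ab_group_add"
    and sK :: "complex \<Rightarrow> 'k \<Rightarrow> 'k::ab_group_add"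
    and sT :: "complex \<Rightarrow> 't \<Rightarrow> 't::ab_group_add"
    and sS :: "complex \<Rightarrow> 'u \<Rightarrow> 'u::ab_group_add"
    and \<rho>V :: "Virbasis \<Rightarrow> 'v \<Rightarrow> 'v" and \<rho>W :: "Virbasis \<Rightarrow> 'w \<Rightarrow> 'w"
    and \<rho>H :: "Hbasis \<Rightarrow> 'h \<Rightarrow> 'h" and \<rho>K :: "Hbasis \<Rightarrow> 'k \<Rightarrow> 'k"
    and tp :: "'v \<Rightarrow> 'h \<Rightarrow> 't" and tp' :: "'w \<Rightarrow> 'k \<Rightarrow> 'u"
    and \<rho>T :: "Lbasis \<Rightarrow> 't \<Rightarrow> 't" and \<rho>S :: "Lbasis \<Rightarrow> 'u \<Rightarrow> 'u"
    and c d lam \<mu> :: complex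
  assumes V: "Vir_module sV \<rho>V" and W: "Vir_module sW \<rho>W"
    and H: "H_module sH \<rho>H" "in_O_H \<rho>H" "simple_rep sH \<rho>H"
    and Hz: "c \<noteq> 0" "\<forall>h. \<rho>H Hz h = sH c h"
    and K: "H_module sK \<rho>K" "in_O_H \<rho>K" "simple_rep sK \<rho>K"
    and Kz: "d \<noteq> 0" "\<forall>k. \<rho>K Hz k = sK d k"
    and T: "is_tensor_product sV sH sT tp"
           "tensor_action sT tp (VL \<rho>V) (Hlam sH \<rho>H c lam) \<rho>T"
    and S: "is_tensor_product sW sK sS tp'"
           "tensor_action sS tp' (VL \<rho>W) (Hlam sK \<rho>K d \<mu>) \<rho>S"
  shows "(\<forall>U. invariant_subspace sT \<rho>T U \<longrightarrow>
            (\<exists>V'. invariant_subspace sV \<rho>V V' \<and>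
                  U = module.span sT {tp v h | v h. v \<in> V'}))
       \<and> (simple_rep sT \<rho>T \<longleftrightarrow> simple_rep sV \<rho>V)
       \<and> ((\<exists>v::'v. v \<noteq> 0) \<and> (\<exists>w::'w. w \<noteq> 0) \<longrightarrow>
            (rep_iso sT sS \<rho>T \<rho>S \<longleftrightarrow>
               lam = \<mu> \<and> rep_iso sV sW \<rho>V \<rho>W \<and> rep_iso sH sK \<rho>H \<rho>K))"
proof -
  interpret A: side sV \<rho>V sH \<rho>H c lam sT tp \<rho>T
    unfolding side_def using V H(1) H(3) Hz(2) T by blast
  interpret B: side sW \<rho>W sK \<rho>K d \<mu> sS tp' \<rho>S
    unfolding side_def using W K(1) K(3) Kz(2) S by blast
  interpret P: two sV \<rho>V sH \<rho>H c lam sT tp \<rho>T sW \<rho>W sK \<rho>K d \<mu> sS tp' \<rho>S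
    unfolding two_def using A.side_axioms B.side_axioms by blast
  interpret Q: two sW \<rho>W sK \<rho>K d \<mu> sS tp' \<rho>S sV \<rho>V sH \<rho>H c lam sT tp \<rho>T
    unfolding two_def using A.side_axioms B.side_axioms by blast
  have p1: "\<forall>U. invariant_subspace sT \<rho>T U \<longrightarrow>
            (\<exists>V'. invariant_subspace sV \<rho>V V' \<and>
                  U = module.span sT {tp v h | v h. v \<in> V'})"
    using A.part1 by blast
  have p3: "rep_iso sT sS \<rho>T \<rho>S \<longleftrightarrow> lam = \<mu> \<and> rep_iso sV sW \<rho>V \<rho>W \<and> rep_iso sH sK \<rho>H \<rho>K"
    if nz: "\<exists>v::'v. v \<noteq> 0" for dummy :: bool
  proof
    assume "lam = \<mu> \<and> rep_iso sV sW \<rho>V \<rho>W \<and> rep_iso sH sK \<rho>H \<rho>K"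
    thus "rep_iso sT sS \<rho>T \<rho>S" using P.iso_back by simp
  next
    assume iso: "rep_iso sT sS \<rho>T \<rho>S"
    obtain F where F: "Vector_Spaces.linear sT sS F" "bij F" "\<And>x t. F (\<rho>T x t) = \<rho>S x (F t)"
      using iso unfolding rep_iso_def by blast
    obtain v0 :: 'v where v0: "v0 \<noteq> 0" using nz by blast
    have lc: "lam = \<mu> \<and> c = d" by (rule P.scal_eq[OF F v0])
    have Hiso: "rep_iso sH sK \<rho>H \<rho>K" by (rule P.H_fwd[OF F v0])
    then obtain g where g: "Vector_Spaces.linear sH sK g" "bij g" "\<And>x v. g (\<rho>H x v) = \<rho>K x (g v)"
      unfolding rep_iso_def by blast
    obtain \<Phi> where \<Phi>: "Vector_Spaces.linear sV sW \<Phi>" "\<forall>v h. F (tp v h) = tp' (\<Phi> v) (g h)"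
      using P.Phi_exists[OF F(1) F(3) g] by blast
    have Fi1: "Vector_Spaces.linear sS sT (inv F)" by (rule lin_inv[OF F(1,2)])
    have Fi2: "inv F (\<rho>S x t) = \<rho>T x (inv F t)" for x t
      by (rule inv_intertwine[OF F(2)]) (rule F(3))
    have gi1: "Vector_Spaces.linear sK sH (inv g)" by (rule lin_inv[OF g(1,2)])
    have gi2: "bij (inv g)" by (rule bij_imp_bij_inv[OF g(2)])
    have gi3: "inv g (\<rho>K x v) = \<rho>H x (inv g v)" for x v
      by (rule inv_intertwine[OF g(2)]) (rule g(3))
    obtain \<Psi> where \<Psi>: "Vector_Spaces.linear sW sV \<Psi>" "\<forall>w k. inv F (tp' w k) = tp (\<Psi> w) (inv g k)"
      using Q.Phi_exists[OF Fi1 Fi2 gi1 gi2 gi3] by blast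
    have cd: "c = d" and lm: "lam = \<mu>" using lc by auto
    have "rep_iso sV sW \<rho>V \<rho>W"
      by (rule P.V_iso[OF F g cd lm \<Phi>(1) \<Phi>(2)[rule_format] \<Psi>(2)[rule_format]])
    thus "lam = \<mu> \<and> rep_iso sV sW \<rho>V \<rho>W \<and> rep_iso sH sK \<rho>H \<rho>K" using lc Hiso by blast
  qed
  show ?thesis
  proof (intro conjI impI)
    show "simple_rep sT \<rho>T \<longleftrightarrow> simple_rep sV \<rho>V" by (rule A.part1b)
    assume "(\<exists>v::'v. v \<noteq> 0) \<and> (\<exists>w::'w. w \<noteq> 0)"
    hence "\<exists>v::'v. v \<noteq> 0" by (rule conjunct1)
    thus "rep_iso sT sS \<rho>T \<rho>S \<longleftrightarrow> lam = \<mu> \<and> rep_iso sV sW \<rho>V \<rho>W \<and> rep_iso sH sK \<rho>H \<rho>K"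
      by (rule p3)
  qed (rule p1)
qed


end
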